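(* For every $\ell\in\mathbb{N}^+$ there is a dynamic flow network with infinite considered time, of size polynomial in $\ell$, acyclic, with only two capacity changes, such that every minimum dynamic cut and every maximum dynamic flow has complexity at least $2^\ell$ (exponential complexity); this also holds with discrete time.
   Context: A dynamic flow network: directed graph $G=(V,E)$, source $s$, target $t$, constant transit times $\tau_e\ge0$, piecewise constant capacity functions $u_e$ with finitely many changes in total; a capacity change is a jump of the capacity function of one edge at one time. With infinite considered time, time ranges over $\mathbb{R}$; a flow (resp. cut) is maximum (resp. minimum) with infinite considered time if it is constant outside some finite interval $I$ and optimal on $I$ in the sense that for every interval $J\supset I$ there is an interval $K\supset J$ such that some maximum flow (resp. minimum cut) for the considered time interval $K$ coincides with it on $J$. A dynamic flow is a family of measurable functions $f_e$ with $f_e\le u_e$ and strong flow conservation at all $v\ne s,t$ at all times (with transit time delay $\tau_e$ along $e$). A dynamic cut assigns each vertex $v$ a function $S_v$ into $\{0,1\}$ with $S_s\equiv1$, $S_t\equiv0$; its capacity is the integral over time of $\sum_{e=(v,w):S_v(\Theta)=1,S_w(\Theta+\tau_e)=0}u_e(\Theta)$. The complexity of a cut is the total number of times vertices switch value of $S_v$; the complexity of a flow is the total number of changes of the functions $f_e$. *)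

theory Defs
  imports "HOL-Analysis.Analysis" "HOL-Library.Extended_Nat"
begin

definition changes :: "(real \<Rightarrow> 'a) \<Rightarrow> real set" where
  "changes g = {\<theta>. \<not> (\<exists>\<delta>>0. \<forall>x. \<bar>x - \<theta>\<bar> < \<delta> \<longrightarrow> g x = g \<theta>)}"

definition nchanges :: "(real \<Rightarrow> 'a) \<Rightarrow> enat" where
  "nchanges g = (if finite (changes g) then enat (card (changes g)) else \<infinity>)"

definition changes_d :: "(int \<Rightarrow> 'a) \<Rightarrow> int set" where
  "changes_d g = {\<theta>. g (\<theta> + 1) \<noteq> g \<theta>}"

definition nchanges_d :: "(int \<Rightarrow> 'a) \<Rightarrow> enat" where
  "nchanges_d g = (if finite (changes_d g) then enat (card (changes_d g)) else \<infinity>)"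

text \<open>Vertices are natural numbers, edges are pairs of vertices.
  \<open>\<tau>\<close> are the transit times, \<open>u\<close> the capacity functions.\<close>

definition acyclic_graph :: "(nat \<times> nat) set \<Rightarrow> bool" where
  "acyclic_graph E \<longleftrightarrow> (\<forall>v. (v, v) \<notin> E\<^sup>+)"

definition dyn_network ::
  "nat set \<Rightarrow> (nat \<times> nat) set \<Rightarrow> nat \<Rightarrow> nat \<Rightarrow> (nat \<times> nat \<Rightarrow> real) \<Rightarrow> (nat \<times> nat \<Rightarrow> real \<Rightarrow> real) \<Rightarrow> bool"
  where
  "dyn_network V E s t \<tau> u \<longleftrightarrow>
     finite V \<and> E \<subseteq> V \<times> V \<and> s \<in> V \<and> t \<in> V \<and> s \<noteq> t \<and>
     (\<forall>e\<in>E. \<tau> e \<ge> 0) \<and> (\<forall>e\<in>E. \<forall>\<theta>. u e \<theta> \<ge> 0) \<and>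
     (\<forall>e\<in>E. finite (changes (u e)))"

definition num_cap_changes :: "(nat \<times> nat) set \<Rightarrow> (nat \<times> nat \<Rightarrow> real \<Rightarrow> real) \<Rightarrow> enat" where
  "num_cap_changes E u = (\<Sum>e\<in>E. nchanges (u e))"

text \<open>Size bound: at most \<open>P\<close> vertices and edges, all numerical data (transit times,
  capacity values, times of capacity changes) are integers of absolute value at
  most \<open>2^P\<close>, i.e. of encoding length \<open>O(P)\<close>.\<close>
definition dyn_size_le ::
  "nat set \<Rightarrow> (nat \<times> nat) set \<Rightarrow> (nat \<times> nat \<Rightarrow> real) \<Rightarrow> (nat \<times> nat \<Rightarrow> real \<Rightarrow> real) \<Rightarrow> nat \<Rightarrow> bool"
  where
  "dyn_size_le V E \<tau> u P \<longleftrightarrow>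
     card V \<le> P \<and> card E \<le> P \<and>
     (\<forall>e\<in>E. \<tau> e \<in> \<int> \<and> \<bar>\<tau> e\<bar> \<le> 2 ^ P) \<and>
     (\<forall>e\<in>E. \<forall>\<theta>. u e \<theta> \<in> \<int> \<and> \<bar>u e \<theta>\<bar> \<le> 2 ^ P) \<and>
     (\<forall>e\<in>E. \<forall>\<theta>\<in>changes (u e). \<theta> \<in> \<int> \<and> \<bar>\<theta>\<bar> \<le> 2 ^ P)"

text \<open>Flow entering edge \<open>e\<close> at time \<open>\<theta>\<close> arrives at time \<open>\<theta> + \<tau> e\<close>; both must lie in
  the considered time interval.\<close>
definition is_flow ::
  "nat set \<Rightarrow> (nat \<times> nat) set \<Rightarrow> nat \<Rightarrow> nat \<Rightarrow> (nat \<times> nat \<Rightarrow> real) \<Rightarrow> (nat \<times> nat \<Rightarrow> real \<Rightarrow> real)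
   \<Rightarrow> real \<Rightarrow> real \<Rightarrow> (nat \<times> nat \<Rightarrow> real \<Rightarrow> real) \<Rightarrow> bool"
  where
  "is_flow V E s t \<tau> u a b f \<longleftrightarrow>
     (\<forall>e\<in>E. f e \<in> borel_measurable borel) \<and>
     (\<forall>e\<in>E. \<forall>\<theta>. 0 \<le> f e \<theta> \<and> f e \<theta> \<le> u e \<theta>) \<and>
     (\<forall>e\<in>E. \<forall>\<theta>. \<not> (a \<le> \<theta> \<and> \<theta> + \<tau> e \<le> b) \<longrightarrow> f e \<theta> = 0) \<and>
     (\<forall>v\<in>V - {s, t}. \<forall>\<theta>.
        (\<Sum>e\<in>{e\<in>E. snd e = v}. f e (\<theta> - \<tau> e)) = (\<Sum>e\<in>{e\<in>E. fst e = v}. f e \<theta>))"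

definition flow_value ::
  "(nat \<times> nat) set \<Rightarrow> nat \<Rightarrow> (nat \<times> nat \<Rightarrow> real) \<Rightarrow> (nat \<times> nat \<Rightarrow> real \<Rightarrow> real) \<Rightarrow> real"
  where
  "flow_value E s \<tau> f =
     (LINT \<theta>|lborel. (\<Sum>e\<in>{e\<in>E. fst e = s}. f e \<theta>) - (\<Sum>e\<in>{e\<in>E. snd e = s}. f e (\<theta> - \<tau> e)))"

definition is_max_flow ::
  "nat set \<Rightarrow> (nat \<times> nat) set \<Rightarrow> nat \<Rightarrow> nat \<Rightarrow> (nat \<times> nat \<Rightarrow> real) \<Rightarrow> (nat \<times> nat \<Rightarrow> real \<Rightarrow> real)
   \<Rightarrow> real \<Rightarrow> real \<Rightarrow> (nat \<times> nat \<Rightarrow> real \<Rightarrow> real) \<Rightarrow> bool"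
  where
  "is_max_flow V E s t \<tau> u a b f \<longleftrightarrow>
     is_flow V E s t \<tau> u a b f \<and>
     (\<forall>g. is_flow V E s t \<tau> u a b g \<longrightarrow> flow_value E s \<tau> g \<le> flow_value E s \<tau> f)"

definition is_cut ::
  "nat set \<Rightarrow> nat \<Rightarrow> nat \<Rightarrow> real \<Rightarrow> real \<Rightarrow> (nat \<Rightarrow> real \<Rightarrow> bool) \<Rightarrow> bool"
  where
  "is_cut V s t a b S \<longleftrightarrow>
     (\<forall>v\<in>V. {\<theta>. S v \<theta>} \<in> sets borel) \<and>
     (\<forall>\<theta>\<in>{a..b}. S s \<theta> \<and> \<not> S t \<theta>)"

definition cut_capacity ::
  "(nat \<times> nat) set \<Rightarrow> (nat \<times> nat \<Rightarrow> real) \<Rightarrow> (nat \<times> nat \<Rightarrow> real \<Rightarrow> real) \<Rightarrow> real \<Rightarrow> real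
   \<Rightarrow> (nat \<Rightarrow> real \<Rightarrow> bool) \<Rightarrow> real"
  where
  "cut_capacity E \<tau> u a b S =
     (\<Sum>e\<in>E. LINT \<theta>:{a..b - \<tau> e}|lborel.
        (if S (fst e) \<theta> \<and> \<not> S (snd e) (\<theta> + \<tau> e) then u e \<theta> else 0))"

definition is_min_cut ::
  "nat set \<Rightarrow> (nat \<times> nat) set \<Rightarrow> nat \<Rightarrow> nat \<Rightarrow> (nat \<times> nat \<Rightarrow> real) \<Rightarrow> (nat \<times> nat \<Rightarrow> real \<Rightarrow> real)
   \<Rightarrow> real \<Rightarrow> real \<Rightarrow> (nat \<Rightarrow> real \<Rightarrow> bool) \<Rightarrow> bool"
  where
  "is_min_cut V E s t \<tau> u a b S \<longleftrightarrow>
     is_cut V s t a b S \<and>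
     (\<forall>S'. is_cut V s t a b S' \<longrightarrow> cut_capacity E \<tau> u a b S \<le> cut_capacity E \<tau> u a b S')"

definition is_flow_inf ::
  "nat set \<Rightarrow> (nat \<times> nat) set \<Rightarrow> nat \<Rightarrow> nat \<Rightarrow> (nat \<times> nat \<Rightarrow> real) \<Rightarrow> (nat \<times> nat \<Rightarrow> real \<Rightarrow> real)
   \<Rightarrow> (nat \<times> nat \<Rightarrow> real \<Rightarrow> real) \<Rightarrow> bool"
  where
  "is_flow_inf V E s t \<tau> u f \<longleftrightarrow>
     (\<forall>e\<in>E. f e \<in> borel_measurable borel) \<and>
     (\<forall>e\<in>E. \<forall>\<theta>. 0 \<le> f e \<theta> \<and> f e \<theta> \<le> u e \<theta>) \<and>
     (\<forall>v\<in>V - {s, t}. \<forall>\<theta>.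
        (\<Sum>e\<in>{e\<in>E. snd e = v}. f e (\<theta> - \<tau> e)) = (\<Sum>e\<in>{e\<in>E. fst e = v}. f e \<theta>))"

definition is_max_flow_inf ::
  "nat set \<Rightarrow> (nat \<times> nat) set \<Rightarrow> nat \<Rightarrow> nat \<Rightarrow> (nat \<times> nat \<Rightarrow> real) \<Rightarrow> (nat \<times> nat \<Rightarrow> real \<Rightarrow> real)
   \<Rightarrow> (nat \<times> nat \<Rightarrow> real \<Rightarrow> real) \<Rightarrow> bool"
  where
  "is_max_flow_inf V E s t \<tau> u f \<longleftrightarrow>
     is_flow_inf V E s t \<tau> u f \<and>
     (\<exists>a b. a \<le> b \<and>
        (\<forall>e\<in>E. \<exists>c. \<forall>\<theta>. \<theta> \<notin> {a..b} \<longrightarrow> f e \<theta> = c) \<and>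
        (\<forall>j1 j2. j1 \<le> a \<and> b \<le> j2 \<longrightarrow>
           (\<exists>k1 k2 g. k1 \<le> j1 \<and> j2 \<le> k2 \<and> is_max_flow V E s t \<tau> u k1 k2 g \<and>
              (\<forall>e\<in>E. \<forall>\<theta>\<in>{j1..j2}. g e \<theta> = f e \<theta>))))"

definition is_cut_inf :: "nat set \<Rightarrow> nat \<Rightarrow> nat \<Rightarrow> (nat \<Rightarrow> real \<Rightarrow> bool) \<Rightarrow> bool" where
  "is_cut_inf V s t S \<longleftrightarrow>
     (\<forall>v\<in>V. {\<theta>. S v \<theta>} \<in> sets borel) \<and> (\<forall>\<theta>. S s \<theta> \<and> \<not> S t \<theta>)"

definition is_min_cut_inf ::
  "nat set \<Rightarrow> (nat \<times> nat) set \<Rightarrow> nat \<Rightarrow> nat \<Rightarrow> (nat \<times> nat \<Rightarrow> real) \<Rightarrow> (nat \<times> nat \<Rightarrow> real \<Rightarrow> real)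
   \<Rightarrow> (nat \<Rightarrow> real \<Rightarrow> bool) \<Rightarrow> bool"
  where
  "is_min_cut_inf V E s t \<tau> u S \<longleftrightarrow>
     is_cut_inf V s t S \<and>
     (\<exists>a b. a \<le> b \<and>
        (\<forall>v\<in>V. \<exists>c. \<forall>\<theta>. \<theta> \<notin> {a..b} \<longrightarrow> S v \<theta> = c) \<and>
        (\<forall>j1 j2. j1 \<le> a \<and> b \<le> j2 \<longrightarrow>
           (\<exists>k1 k2 S'. k1 \<le> j1 \<and> j2 \<le> k2 \<and> is_min_cut V E s t \<tau> u k1 k2 S' \<and>
              (\<forall>v\<in>V. \<forall>\<theta>\<in>{j1..j2}. S' v \<theta> = S v \<theta>))))"

definition flow_complexity :: "(nat \<times> nat) set \<Rightarrow> (nat \<times> nat \<Rightarrow> real \<Rightarrow> real) \<Rightarrow> enat" where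
  "flow_complexity E f = (\<Sum>e\<in>E. nchanges (f e))"

definition cut_complexity :: "nat set \<Rightarrow> (nat \<Rightarrow> real \<Rightarrow> bool) \<Rightarrow> enat" where
  "cut_complexity V S = (\<Sum>v\<in>V. nchanges (S v))"

definition dyn_network_d ::
  "nat set \<Rightarrow> (nat \<times> nat) set \<Rightarrow> nat \<Rightarrow> nat \<Rightarrow> (nat \<times> nat \<Rightarrow> int) \<Rightarrow> (nat \<times> nat \<Rightarrow> int \<Rightarrow> real) \<Rightarrow> bool"
  where
  "dyn_network_d V E s t \<tau> u \<longleftrightarrow>
     finite V \<and> E \<subseteq> V \<times> V \<and> s \<in> V \<and> t \<in> V \<and> s \<noteq> t \<and>
     (\<forall>e\<in>E. \<tau> e \<ge> 0) \<and> (\<forall>e\<in>E. \<forall>\<theta>. u e \<theta> \<ge> 0) \<and>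
     (\<forall>e\<in>E. finite (changes_d (u e)))"

definition num_cap_changes_d :: "(nat \<times> nat) set \<Rightarrow> (nat \<times> nat \<Rightarrow> int \<Rightarrow> real) \<Rightarrow> enat" where
  "num_cap_changes_d E u = (\<Sum>e\<in>E. nchanges_d (u e))"

definition dyn_size_le_d ::
  "nat set \<Rightarrow> (nat \<times> nat) set \<Rightarrow> (nat \<times> nat \<Rightarrow> int) \<Rightarrow> (nat \<times> nat \<Rightarrow> int \<Rightarrow> real) \<Rightarrow> nat \<Rightarrow> bool"
  where
  "dyn_size_le_d V E \<tau> u P \<longleftrightarrow>
     card V \<le> P \<and> card E \<le> P \<and>
     (\<forall>e\<in>E. \<bar>\<tau> e\<bar> \<le> 2 ^ P) \<and>
     (\<forall>e\<in>E. \<forall>\<theta>. u e \<theta> \<in> \<int> \<and> \<bar>u e \<theta>\<bar> \<le> 2 ^ P) \<and>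
     (\<forall>e\<in>E. \<forall>\<theta>\<in>changes_d (u e). \<bar>\<theta>\<bar> \<le> 2 ^ P)"

definition is_flow_d ::
  "nat set \<Rightarrow> (nat \<times> nat) set \<Rightarrow> nat \<Rightarrow> nat \<Rightarrow> (nat \<times> nat \<Rightarrow> int) \<Rightarrow> (nat \<times> nat \<Rightarrow> int \<Rightarrow> real)
   \<Rightarrow> int \<Rightarrow> int \<Rightarrow> (nat \<times> nat \<Rightarrow> int \<Rightarrow> real) \<Rightarrow> bool"
  where
  "is_flow_d V E s t \<tau> u a b f \<longleftrightarrow>
     (\<forall>e\<in>E. \<forall>\<theta>. 0 \<le> f e \<theta> \<and> f e \<theta> \<le> u e \<theta>) \<and>
     (\<forall>e\<in>E. \<forall>\<theta>. \<not> (a \<le> \<theta> \<and> \<theta> + \<tau> e \<le> b) \<longrightarrow> f e \<theta> = 0) \<and>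
     (\<forall>v\<in>V - {s, t}. \<forall>\<theta>.
        (\<Sum>e\<in>{e\<in>E. snd e = v}. f e (\<theta> - \<tau> e)) = (\<Sum>e\<in>{e\<in>E. fst e = v}. f e \<theta>))"

definition flow_value_d ::
  "(nat \<times> nat) set \<Rightarrow> nat \<Rightarrow> (nat \<times> nat \<Rightarrow> int) \<Rightarrow> int \<Rightarrow> int \<Rightarrow> (nat \<times> nat \<Rightarrow> int \<Rightarrow> real) \<Rightarrow> real"
  where
  "flow_value_d E s \<tau> a b f =
     (\<Sum>\<theta>\<in>{a..b}. (\<Sum>e\<in>{e\<in>E. fst e = s}. f e \<theta>) - (\<Sum>e\<in>{e\<in>E. snd e = s}. f e (\<theta> - \<tau> e)))"

definition is_max_flow_d ::
  "nat set \<Rightarrow> (nat \<times> nat) set \<Rightarrow> nat \<Rightarrow> nat \<Rightarrow> (nat \<times> nat \<Rightarrow> int) \<Rightarrow> (nat \<times> nat \<Rightarrow> int \<Rightarrow> real)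
   \<Rightarrow> int \<Rightarrow> int \<Rightarrow> (nat \<times> nat \<Rightarrow> int \<Rightarrow> real) \<Rightarrow> bool"
  where
  "is_max_flow_d V E s t \<tau> u a b f \<longleftrightarrow>
     is_flow_d V E s t \<tau> u a b f \<and>
     (\<forall>g. is_flow_d V E s t \<tau> u a b g \<longrightarrow> flow_value_d E s \<tau> a b g \<le> flow_value_d E s \<tau> a b f)"

definition is_cut_d :: "nat \<Rightarrow> nat \<Rightarrow> int \<Rightarrow> int \<Rightarrow> (nat \<Rightarrow> int \<Rightarrow> bool) \<Rightarrow> bool" where
  "is_cut_d s t a b S \<longleftrightarrow> (\<forall>\<theta>\<in>{a..b}. S s \<theta> \<and> \<not> S t \<theta>)"

definition cut_capacity_d ::
  "(nat \<times> nat) set \<Rightarrow> (nat \<times> nat \<Rightarrow> int) \<Rightarrow> (nat \<times> nat \<Rightarrow> int \<Rightarrow> real) \<Rightarrow> int \<Rightarrow> int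
   \<Rightarrow> (nat \<Rightarrow> int \<Rightarrow> bool) \<Rightarrow> real"
  where
  "cut_capacity_d E \<tau> u a b S =
     (\<Sum>e\<in>E. \<Sum>\<theta>\<in>{a..b - \<tau> e}.
        (if S (fst e) \<theta> \<and> \<not> S (snd e) (\<theta> + \<tau> e) then u e \<theta> else 0))"

definition is_min_cut_d ::
  "(nat \<times> nat) set \<Rightarrow> nat \<Rightarrow> nat \<Rightarrow> (nat \<times> nat \<Rightarrow> int) \<Rightarrow> (nat \<times> nat \<Rightarrow> int \<Rightarrow> real)
   \<Rightarrow> int \<Rightarrow> int \<Rightarrow> (nat \<Rightarrow> int \<Rightarrow> bool) \<Rightarrow> bool"
  where
  "is_min_cut_d E s t \<tau> u a b S \<longleftrightarrow>
     is_cut_d s t a b S \<and>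
     (\<forall>S'. is_cut_d s t a b S' \<longrightarrow> cut_capacity_d E \<tau> u a b S \<le> cut_capacity_d E \<tau> u a b S')"

definition is_flow_inf_d ::
  "nat set \<Rightarrow> (nat \<times> nat) set \<Rightarrow> nat \<Rightarrow> nat \<Rightarrow> (nat \<times> nat \<Rightarrow> int) \<Rightarrow> (nat \<times> nat \<Rightarrow> int \<Rightarrow> real)
   \<Rightarrow> (nat \<times> nat \<Rightarrow> int \<Rightarrow> real) \<Rightarrow> bool"
  where
  "is_flow_inf_d V E s t \<tau> u f \<longleftrightarrow>
     (\<forall>e\<in>E. \<forall>\<theta>. 0 \<le> f e \<theta> \<and> f e \<theta> \<le> u e \<theta>) \<and>
     (\<forall>v\<in>V - {s, t}. \<forall>\<theta>.
        (\<Sum>e\<in>{e\<in>E. snd e = v}. f e (\<theta> - \<tau> e)) = (\<Sum>e\<in>{e\<in>E. fst e = v}. f e \<theta>))"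

definition is_max_flow_inf_d ::
  "nat set \<Rightarrow> (nat \<times> nat) set \<Rightarrow> nat \<Rightarrow> nat \<Rightarrow> (nat \<times> nat \<Rightarrow> int) \<Rightarrow> (nat \<times> nat \<Rightarrow> int \<Rightarrow> real)
   \<Rightarrow> (nat \<times> nat \<Rightarrow> int \<Rightarrow> real) \<Rightarrow> bool"
  where
  "is_max_flow_inf_d V E s t \<tau> u f \<longleftrightarrow>
     is_flow_inf_d V E s t \<tau> u f \<and>
     (\<exists>a b. a \<le> b \<and>
        (\<forall>e\<in>E. \<exists>c. \<forall>\<theta>. \<theta> \<notin> {a..b} \<longrightarrow> f e \<theta> = c) \<and>
        (\<forall>j1 j2. j1 \<le> a \<and> b \<le> j2 \<longrightarrow>
           (\<exists>k1 k2 g. k1 \<le> j1 \<and> j2 \<le> k2 \<and> is_max_flow_d V E s t \<tau> u k1 k2 g \<and>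
              (\<forall>e\<in>E. \<forall>\<theta>\<in>{j1..j2}. g e \<theta> = f e \<theta>))))"

definition is_min_cut_inf_d ::
  "nat set \<Rightarrow> (nat \<times> nat) set \<Rightarrow> nat \<Rightarrow> nat \<Rightarrow> (nat \<times> nat \<Rightarrow> int) \<Rightarrow> (nat \<times> nat \<Rightarrow> int \<Rightarrow> real)
   \<Rightarrow> (nat \<Rightarrow> int \<Rightarrow> bool) \<Rightarrow> bool"
  where
  "is_min_cut_inf_d V E s t \<tau> u S \<longleftrightarrow>
     (\<forall>\<theta>. S s \<theta> \<and> \<not> S t \<theta>) \<and>
     (\<exists>a b. a \<le> b \<and>
        (\<forall>v\<in>V. \<exists>c. \<forall>\<theta>. \<theta> \<notin> {a..b} \<longrightarrow> S v \<theta> = c) \<and>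
        (\<forall>j1 j2. j1 \<le> a \<and> b \<le> j2 \<longrightarrow>
           (\<exists>k1 k2 S'. k1 \<le> j1 \<and> j2 \<le> k2 \<and> is_min_cut_d E s t \<tau> u k1 k2 S' \<and>
              (\<forall>v\<in>V. \<forall>\<theta>\<in>{j1..j2}. S' v \<theta> = S v \<theta>))))"

definition flow_complexity_d :: "(nat \<times> nat) set \<Rightarrow> (nat \<times> nat \<Rightarrow> int \<Rightarrow> real) \<Rightarrow> enat" where
  "flow_complexity_d E f = (\<Sum>e\<in>E. nchanges_d (f e))"

definition cut_complexity_d :: "nat set \<Rightarrow> (nat \<Rightarrow> int \<Rightarrow> bool) \<Rightarrow> enat" where
  "cut_complexity_d V S = (\<Sum>v\<in>V. nchanges_d (S v))"

end

theory Submission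
  imports Defs
begin


definition Pset :: "nat \<Rightarrow> 'a::linordered_idom \<Rightarrow> bool" where
  "Pset i \<theta> \<longleftrightarrow> (\<exists>m<2^i. 2 * of_nat m \<le> \<theta> \<and> \<theta> < 2 * of_nat m + 1)"

lemma Pset_bounds:
  assumes "Pset i (\<theta>::'a::linordered_idom)" shows "0 \<le> \<theta>" "\<theta> < 2^Suc i"
proof -
  obtain m where m: "m < 2^i" "2 * of_nat m \<le> \<theta>" "\<theta> < 2 * of_nat m + 1"
    using assms unfolding Pset_def by blast
  show "0 \<le> \<theta>" using m(2) by (smt (verit) of_nat_0_le_iff mult_nonneg_nonneg zero_le_numeral order_trans)
  have "m + 1 \<le> 2^i" using m(1) by simp
  then have "(of_nat (m+1)::'a) \<le> of_nat (2^i)" by (simp only: of_nat_le_iff)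
  then have "2 * of_nat m + 2 \<le> (2::'a) * 2^i" by simp
  then show "\<theta> < 2^Suc i" using m(3) by simp
qed

lemma Pset_0: "Pset 0 (\<theta>::'a::linordered_idom) \<longleftrightarrow> 0 \<le> \<theta> \<and> \<theta> < 1"
  unfolding Pset_def by auto

lemma nat_cast_lt: "(of_nat a::'a::linordered_idom) < of_nat b \<longleftrightarrow> a < b" by simp

lemma Pset_iff:
  fixes \<theta>0 :: "'a::linordered_idom"
  assumes "0 \<le> \<theta>0" "\<theta>0 < 1"
  shows "Pset i (\<theta>0 + 2 * of_nat m) \<longleftrightarrow> m < 2^i"
proof
  assume "Pset i (\<theta>0 + 2 * of_nat m)"
  then obtain m' where m': "m' < 2^i" "2 * of_nat m' \<le> \<theta>0 + 2 * of_nat m" "\<theta>0 + 2 * of_nat m < 2 * of_nat m' + 1"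
    unfolding Pset_def by blast
  have "2 * (of_nat m'::'a) < 2 * of_nat m + 1" using m'(2) assms by linarith
  then have "(of_nat m'::'a) < of_nat m + 1" by linarith
  then have "(of_nat m'::'a) < of_nat (m + 1)" by simp
  then have 1: "m' \<le> m" by (simp only: nat_cast_lt)
  have "2 * (of_nat m::'a) < 2 * of_nat m' + 1" using m'(3) assms by linarith
  then have "(of_nat m::'a) < of_nat m' + 1" by linarith
  then have "(of_nat m::'a) < of_nat (m' + 1)" by simp
  then have 2: "m \<le> m'" by (simp only: nat_cast_lt)
  show "m < 2^i" using 1 2 m'(1) by simp
next
  assume "m < 2^i" then show "Pset i (\<theta>0 + 2 * of_nat m)" unfolding Pset_def using assms
    by (intro exI[of _ m]) auto
qed

lemma Pset_gap:
  fixes \<theta>0 :: "'a::linordered_idom"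
  assumes "0 \<le> \<theta>0" "\<theta>0 < 1"
  shows "\<not> Pset i (\<theta>0 + 2 * of_nat m - 1)"
proof
  assume "Pset i (\<theta>0 + 2 * of_nat m - 1)"
  then obtain m' where m': "2 * of_nat m' \<le> \<theta>0 + 2 * of_nat m - 1" "\<theta>0 + 2 * of_nat m - 1 < 2 * of_nat m' + 1"
    unfolding Pset_def by blast
  have "2 * (of_nat m'::'a) < 2 * of_nat m" using m'(1) assms by linarith
  then have 1: "m' < m" by simp
  have "2 * (of_nat m::'a) < 2 * of_nat m' + 2" using m'(2) assms by linarith
  then have "(of_nat m::'a) < of_nat m' + 1" by linarith
  then have "(of_nat m::'a) < of_nat (m' + 1)" by simp
  then have 2: "m < m' + 1" by (simp only: nat_cast_lt)
  show False using 1 2 by simp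
qed

lemma Pset_Suc:
  fixes \<theta> :: "'a::linordered_idom"
  shows "Pset (Suc i) \<theta> \<longleftrightarrow> Pset i \<theta> \<or> Pset i (\<theta> - 2^Suc i)"
proof
  assume "Pset (Suc i) \<theta>"
  then obtain m where m: "m < 2^Suc i" "2 * of_nat m \<le> \<theta>" "\<theta> < 2 * of_nat m + 1"
    unfolding Pset_def by blast
  show "Pset i \<theta> \<or> Pset i (\<theta> - 2^Suc i)"
  proof (cases "m < 2^i")
    case True then show ?thesis using m unfolding Pset_def by blast
  next
    case False
    define m' where "m' = m - 2^i"
    have mm: "m = m' + 2^i" using False m'_def by simp
    have "m' < 2^i" using m(1) mm by simp
    moreover have "(2::'a) * of_nat m = 2 * of_nat m' + 2^Suc i" using mm by simp
    ultimately show ?thesis using m unfolding Pset_def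
      by (intro disjI2 exI[of _ m']) auto
  qed
next
  assume "Pset i \<theta> \<or> Pset i (\<theta> - 2^Suc i)"
  then show "Pset (Suc i) \<theta>"
  proof
    assume "Pset i \<theta>"
    then obtain m where m: "m < 2^i" "2 * of_nat m \<le> \<theta>" "\<theta> < 2 * of_nat m + 1"
      unfolding Pset_def by blast
    then show ?thesis unfolding Pset_def by (intro exI[of _ m]) auto
  next
    assume "Pset i (\<theta> - 2^Suc i)"
    then obtain m where m: "m < 2^i" "2 * of_nat m \<le> \<theta> - 2^Suc i" "\<theta> - 2^Suc i < 2 * of_nat m + 1"
      unfolding Pset_def by blast
    have "(2::'a) * of_nat (m + 2^i) = 2 * of_nat m + 2^Suc i" by simp
    then show ?thesis unfolding Pset_def using m
      by (intro exI[of _ "m + 2^i"]) (auto simp: algebra_simps)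
  qed
qed

lemma Pset_disj:
  fixes \<theta> :: "'a::linordered_idom"
  shows "\<not> (Pset i \<theta> \<and> Pset i (\<theta> - 2^Suc i))"
  using Pset_bounds[of i \<theta>] Pset_bounds[of i "\<theta> - 2^Suc i"] by auto

lemma sum_even_odd: "(\<Sum>m<2*N. G m) = (\<Sum>m<N. G (2*m)) + (\<Sum>m<N. G (2*m+1))" for G :: "nat \<Rightarrow> 'b::comm_monoid_add"
  by (induction N) (auto simp: algebra_simps)

lemma sum_halves: "(\<Sum>m<N+N. G m) = (\<Sum>m<N. G m) + (\<Sum>m<N. G (N+m))" for G :: "nat \<Rightarrow> 'b::comm_monoid_add"
proof -
  have "(\<Sum>m<N+N. G m) = sum G {0..<N+N}" by (simp add: atLeast0LessThan)
  also have "\<dots> = sum G {0..<N} + sum G {N..<N+N}" by (rule sum.atLeastLessThan_concat[symmetric]) auto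
  also have "sum G {N..<N+N} = sum G {0+N..<N+N}" by simp
  also have "\<dots> = (\<Sum>m\<in>{0..<N}. G (m+N))" by (rule sum.shift_bounds_nat_ivl)
  finally show ?thesis by (simp add: atLeast0LessThan add.commute)
qed


definition Tc :: "(nat \<Rightarrow> 'a::linordered_idom \<Rightarrow> bool) \<Rightarrow> (nat \<Rightarrow> 'a \<Rightarrow> bool) \<Rightarrow> real \<Rightarrow> nat \<Rightarrow> 'a \<Rightarrow> real" where
  "Tc X Y M i \<theta> = (if X i \<theta> \<and> \<not> X (Suc i) \<theta> then M else 0)
     + (if X i \<theta> \<and> \<not> Y i (\<theta> + 2^Suc i) then M else 0)
     + (if Y i (\<theta> + 2^Suc i) \<and> \<not> X (Suc i) (\<theta> + 2^Suc i) then M else 0)"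

primrec Af :: "(nat \<Rightarrow> 'a::linordered_idom \<Rightarrow> bool) \<Rightarrow> (nat \<Rightarrow> 'a \<Rightarrow> bool) \<Rightarrow> real \<Rightarrow> nat \<Rightarrow> nat \<Rightarrow> 'a \<Rightarrow> real" where
  "Af X Y M 0 i \<theta> = (if X i \<theta> then 1 else 0)"
| "Af X Y M (Suc n) i \<theta> = Tc X Y M i \<theta> + Af X Y M n (Suc i) \<theta> + Af X Y M n (Suc i) (\<theta> + 2^Suc i)"

lemma Tc_nonneg: "M \<ge> 0 \<Longrightarrow> Tc X Y M i \<theta> \<ge> 0"
  unfolding Tc_def by auto

lemma Af_nonneg: "M \<ge> 0 \<Longrightarrow> Af X Y M n i \<theta> \<ge> 0"
  by (induction n arbitrary: i \<theta>) (auto intro!: add_nonneg_nonneg Tc_nonneg)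

lemma Af_lower:
  assumes "M \<ge> 2^n + 1" "X i \<theta>"
  shows "Af X Y M n i \<theta> \<ge> 2^n + (if \<exists>m<(2::nat)^n. \<not> X (i+n) (\<theta> + 2^Suc i * of_nat m) then 1 else 0)"
  using assms
proof (induction n arbitrary: i \<theta>)
  case 0
  then show ?case by simp
next
  case (Suc n)
  have M0: "M \<ge> 0" using Suc.prems(1) by (smt (verit) zero_le_power)
  have "(2::real)^n \<ge> 0" by simp
  then have Mn: "M \<ge> 2^n + 1" using Suc.prems(1) by (simp only: power_Suc)
  define d :: 'a where "d = 2^Suc i"
  have A1: "Af X Y M n (Suc i) \<theta> \<ge> 0" "Af X Y M n (Suc i) (\<theta> + d) \<ge> 0" using Af_nonneg[OF M0] by blast+
  have T0: "Tc X Y M i \<theta> \<ge> 0" by (rule Tc_nonneg[OF M0])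
  have eq: "Af X Y M (Suc n) i \<theta> = Tc X Y M i \<theta> + Af X Y M n (Suc i) \<theta> + Af X Y M n (Suc i) (\<theta> + d)"
    by (simp add: d_def)
  show ?case
  proof (cases "X (Suc i) \<theta> \<and> Y i (\<theta> + d) \<and> X (Suc i) (\<theta> + d)")
    case False
    then have "Tc X Y M i \<theta> \<ge> M" using Suc.prems(2) M0 unfolding Tc_def d_def by auto
    then show ?thesis using eq A1 Suc.prems(1) by auto
  next
    case True
    have IH1: "Af X Y M n (Suc i) \<theta> \<ge> 2^n + (if \<exists>m<(2::nat)^n. \<not> X (Suc i+n) (\<theta> + 2^Suc (Suc i) * of_nat m) then 1 else 0)"
      using Suc.IH[OF Mn] True by blast
    have IH2: "Af X Y M n (Suc i) (\<theta> + d) \<ge> 2^n + (if \<exists>m<(2::nat)^n. \<not> X (Suc i+n) (\<theta> + d + 2^Suc (Suc i) * of_nat m) then 1 else 0)"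
      using Suc.IH[OF Mn] True by blast
    have bad: "(\<exists>m<(2::nat)^Suc n. \<not> X (i + Suc n) (\<theta> + 2^Suc i * of_nat m)) \<Longrightarrow>
       (\<exists>m<(2::nat)^n. \<not> X (Suc i+n) (\<theta> + 2^Suc (Suc i) * of_nat m)) \<or>
       (\<exists>m<(2::nat)^n. \<not> X (Suc i+n) (\<theta> + d + 2^Suc (Suc i) * of_nat m))"
    proof -
      assume "\<exists>m<(2::nat)^Suc n. \<not> X (i + Suc n) (\<theta> + 2^Suc i * of_nat m)"
      then obtain m where m: "m < 2^Suc n" "\<not> X (Suc i + n) (\<theta> + 2^Suc i * of_nat m)" by auto
      obtain q r where qr: "m = 2*q + r" "r < 2" by (metis mod_less_divisor mult_div_mod_eq zero_less_numeral)
      have q: "q < 2^n" using m(1) qr by simp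
      have cast: "(2::'a)^Suc i * of_nat m = (if r = 0 then 0 else d) + 2^Suc (Suc i) * of_nat q"
        using qr by (cases "r = 0") (auto simp: d_def algebra_simps)
      have mm: "\<not> X (Suc i + n) (\<theta> + ((if r = 0 then 0 else d) + 2^Suc (Suc i) * of_nat q))"
        using m(2) by (simp only: cast not_False_eq_True)
      show ?thesis
      proof (cases "r = 0")
        case True
        then have "\<not> X (Suc i + n) (\<theta> + 2^Suc (Suc i) * of_nat q)" using mm by simp
        then show ?thesis using q by blast
      next
        case False
        then have "\<not> X (Suc i + n) (\<theta> + d + 2^Suc (Suc i) * of_nat q)" using mm by (simp add: add.assoc)
        then show ?thesis using q by blast
      qed
    qed
    show ?thesis using eq IH1 IH2 T0 bad by (auto split: if_splits)
  qed
qed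

lemma Af_closed:
  "Af X Y M n i \<theta> = (\<Sum>j<n. \<Sum>m<(2::nat)^j. Tc X Y M (i+j) (\<theta> + 2^Suc i * of_nat m))
     + (\<Sum>m<(2::nat)^n. if X (i+n) (\<theta> + 2^Suc i * of_nat m) then 1 else 0)"
proof (induction n arbitrary: i \<theta>)
  case 0
  then show ?case by simp
next
  case (Suc n)
  define d :: 'a where "d = 2^Suc i"
  have e1: "\<And>m. (2::'a)^Suc i * of_nat (2*m) = 2^Suc (Suc i) * of_nat m" by simp
  have e2: "\<And>m. (2::'a)^Suc i * of_nat (2*m+1) = d + 2^Suc (Suc i) * of_nat m" by (simp add: d_def algebra_simps)
  have s1: "\<And>G::nat \<Rightarrow> real. (\<Sum>m<(2::nat)^Suc n. G m) = (\<Sum>m<2^n. G (2*m)) + (\<Sum>m<2^n. G (2*m+1))"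
    using sum_even_odd by (metis power_Suc)
  have L: "(\<Sum>m<(2::nat)^Suc n. if X (i + Suc n) (\<theta> + 2^Suc i * of_nat m) then 1 else (0::real))
     = (\<Sum>m<(2::nat)^n. if X (Suc i + n) (\<theta> + 2^Suc (Suc i) * of_nat m) then 1 else 0)
     + (\<Sum>m<(2::nat)^n. if X (Suc i + n) (\<theta> + d + 2^Suc (Suc i) * of_nat m) then 1 else 0)"
    by (subst s1) (simp only: e1 e2 add.assoc add_Suc_shift add_Suc)
  have T: "(\<Sum>j<Suc n. \<Sum>m<(2::nat)^j. Tc X Y M (i+j) (\<theta> + 2^Suc i * of_nat m))
      = Tc X Y M i \<theta> + (\<Sum>j<n. \<Sum>m<(2::nat)^Suc j. Tc X Y M (Suc i+j) (\<theta> + 2^Suc i * of_nat m))"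
    by (subst sum.lessThan_Suc_shift) simp
  have T2: "\<And>j. (\<Sum>m<(2::nat)^Suc j. Tc X Y M (Suc i+j) (\<theta> + 2^Suc i * of_nat m))
     = (\<Sum>m<(2::nat)^j. Tc X Y M (Suc i+j) (\<theta> + 2^Suc (Suc i) * of_nat m))
     + (\<Sum>m<(2::nat)^j. Tc X Y M (Suc i+j) (\<theta> + d + 2^Suc (Suc i) * of_nat m))"
  proof -
    fix j
    have s: "\<And>G::nat \<Rightarrow> real. (\<Sum>m<(2::nat)^Suc j. G m) = (\<Sum>m<2^j. G (2*m)) + (\<Sum>m<2^j. G (2*m+1))"
      using sum_even_odd by (metis power_Suc)
    show "(\<Sum>m<(2::nat)^Suc j. Tc X Y M (Suc i+j) (\<theta> + 2^Suc i * of_nat m))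
     = (\<Sum>m<(2::nat)^j. Tc X Y M (Suc i+j) (\<theta> + 2^Suc (Suc i) * of_nat m))
     + (\<Sum>m<(2::nat)^j. Tc X Y M (Suc i+j) (\<theta> + d + 2^Suc (Suc i) * of_nat m))"
      by (subst s) (simp only: e1 e2 add.assoc)
  qed
  have A: "Af X Y M (Suc n) i \<theta> = Tc X Y M i \<theta> + Af X Y M n (Suc i) \<theta> + Af X Y M n (Suc i) (\<theta> + d)"
    by (simp add: d_def)
  have B: "(\<Sum>j<n. \<Sum>m<(2::nat)^Suc j. Tc X Y M (Suc i+j) (\<theta> + 2^Suc i * of_nat m))
    = (\<Sum>j<n. \<Sum>m<(2::nat)^j. Tc X Y M (Suc i+j) (\<theta> + 2^Suc (Suc i) * of_nat m))
    + (\<Sum>j<n. \<Sum>m<(2::nat)^j. Tc X Y M (Suc i+j) (\<theta> + d + 2^Suc (Suc i) * of_nat m))"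
    by (simp only: T2 sum.distrib)
  have idx: "i + Suc n = Suc i + n" by simp
  show ?case
    apply (unfold A T B L)
    apply (unfold Suc.IH[of "Suc i" \<theta>] Suc.IH[of "Suc i" "\<theta> + d"] idx)
    by (simp only: add.assoc add.left_commute)
qed


lemma flow_tree:
  fixes r z :: "'a::linordered_idom \<Rightarrow> real" and a b Ou :: "nat \<Rightarrow> 'a \<Rightarrow> real"
  assumes a_nn: "\<And>i \<theta>. i < l \<Longrightarrow> 0 \<le> a i \<theta>" and b_nn: "\<And>i \<theta>. i < l \<Longrightarrow> 0 \<le> b i \<theta>"
    and Oi: "\<And>i \<theta>. i < l \<Longrightarrow> Ou i \<theta> = a i \<theta> + b i \<theta>"
    and r_supp: "\<And>\<theta>. \<not> (0 \<le> \<theta> \<and> \<theta> < 1) \<Longrightarrow> r \<theta> = 0"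
    and cons0: "\<And>\<theta>. r \<theta> = Ou 0 \<theta>"
    and consS: "\<And>i \<theta>. i < l \<Longrightarrow> a i \<theta> + b i (\<theta> - 2^Suc i) = Ou (Suc i) \<theta>"
  shows flow_supp: "\<And>i \<theta>. i \<le> l \<Longrightarrow> \<not> Pset i \<theta> \<Longrightarrow> Ou i \<theta> = 0"
    and flow_sum: "\<And>i \<theta>0. i \<le> l \<Longrightarrow> 0 \<le> \<theta>0 \<Longrightarrow> \<theta>0 < 1 \<Longrightarrow> (\<Sum>m<(2::nat)^i. Ou i (\<theta>0 + 2 * of_nat m)) = r \<theta>0"
proof -
  have zero: "a i \<theta> = 0 \<and> b i \<theta> = 0" if "i < l" "Ou i \<theta> = 0" for i \<theta>
    using Oi[OF that(1)] a_nn[OF that(1)] b_nn[OF that(1)] that(2) by (smt (verit))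
  show supp: "Ou i \<theta> = 0" if "i \<le> l" "\<not> Pset i \<theta>" for i \<theta>
    using that
  proof (induction i arbitrary: \<theta>)
    case 0
    then show ?case using cons0 r_supp by (simp add: Pset_0)
  next
    case (Suc i)
    have il: "i < l" using Suc.prems by simp
    have "\<not> Pset i \<theta>" "\<not> Pset i (\<theta> - 2^Suc i)" using Suc.prems(2) Pset_Suc by blast+
    then have "Ou i \<theta> = 0" "Ou i (\<theta> - 2^Suc i) = 0" using Suc.IH il by auto
    then have "a i \<theta> = 0" "b i (\<theta> - 2^Suc i) = 0" using zero il by auto
    then show ?case using consS[OF il, of \<theta>] by simp
  qed
  show "(\<Sum>m<(2::nat)^i. Ou i (\<theta>0 + 2 * of_nat m)) = r \<theta>0" if "i \<le> l" "0 \<le> \<theta>0" "\<theta>0 < 1" for i \<theta>0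
    using that(1)
  proof (induction i)
    case 0
    then show ?case using cons0 by simp
  next
    case (Suc i)
    have il: "i < l" using Suc.prems by simp
    define d :: 'a where "d = 2^Suc i"
    have A0: "a i (\<theta>0 + 2 * of_nat (2^i + m)) = 0" for m
    proof -
      have "\<not> Pset i (\<theta>0 + 2 * of_nat (2^i + m))" by (subst Pset_iff[OF that(2,3)]) simp
      then have "Ou i (\<theta>0 + 2 * of_nat (2^i + m)) = 0" using supp il by simp
      then show ?thesis using zero il by blast
    qed
    have B0: "b i (\<theta>0 + 2 * of_nat m - d) = 0" if mi: "m < 2^i" for m
    proof -
      have "m + 1 \<le> 2^i" using mi by simp
      then have "(of_nat (m + 1)::'a) \<le> of_nat (2^i)" by (simp only: of_nat_le_iff)
      then have "2 * of_nat m + 2 \<le> d" by (simp add: d_def)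
      then have "\<theta>0 + 2 * of_nat m - d < 0" using \<open>\<theta>0 < 1\<close> by linarith
      then have "\<not> Pset i (\<theta>0 + 2 * of_nat m - d)" using Pset_bounds(1) by force
      then have "Ou i (\<theta>0 + 2 * of_nat m - d) = 0" using supp il by simp
      then show ?thesis using zero il by blast
    qed
    have B1: "\<theta>0 + 2 * of_nat (2^i + m) - d = \<theta>0 + 2 * of_nat m" for m
      by (simp add: d_def algebra_simps)
    have "(\<Sum>m<(2::nat)^Suc i. Ou (Suc i) (\<theta>0 + 2 * of_nat m))
        = (\<Sum>m<(2::nat)^i + 2^i. a i (\<theta>0 + 2 * of_nat m) + b i (\<theta>0 + 2 * of_nat m - d))"
    proof -
      have pw: "(2::nat)^Suc i = 2^i + 2^i" by simp
      show ?thesis unfolding pw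
        by (rule sum.cong) (simp_all only: consS[OF il, symmetric] d_def)
    qed
    also have "\<dots> = (\<Sum>m<(2::nat)^i. a i (\<theta>0 + 2 * of_nat m) + b i (\<theta>0 + 2 * of_nat m - d))
        + (\<Sum>m<(2::nat)^i. a i (\<theta>0 + 2 * of_nat (2^i + m)) + b i (\<theta>0 + 2 * of_nat (2^i + m) - d))"
      by (rule sum_halves)
    also have "\<dots> = (\<Sum>m<(2::nat)^i. a i (\<theta>0 + 2 * of_nat m)) + (\<Sum>m<(2::nat)^i. b i (\<theta>0 + 2 * of_nat m))"
    proof -
      have "(\<Sum>m<(2::nat)^i. a i (\<theta>0 + 2 * of_nat m) + b i (\<theta>0 + 2 * of_nat m - d))
          = (\<Sum>m<(2::nat)^i. a i (\<theta>0 + 2 * of_nat m))"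
        by (rule sum.cong) (simp_all only: B0 lessThan_iff add_0_right)
      moreover have "(\<Sum>m<(2::nat)^i. a i (\<theta>0 + 2 * of_nat (2^i + m)) + b i (\<theta>0 + 2 * of_nat (2^i + m) - d))
          = (\<Sum>m<(2::nat)^i. b i (\<theta>0 + 2 * of_nat m))"
        by (rule sum.cong) (simp_all only: A0 B1 add_0_left)
      ultimately show ?thesis by simp
    qed
    also have "\<dots> = (\<Sum>m<(2::nat)^i. Ou i (\<theta>0 + 2 * of_nat m))"
      using Oi[OF il] by (simp add: sum.distrib)
    also have "\<dots> = r \<theta>0" using Suc.IH il by simp
    finally show ?case .
  qed
qed

lemma Jbound:
  fixes X Y :: "nat \<Rightarrow> 'a::linordered_idom \<Rightarrow> bool" and \<theta> :: 'a and M :: real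
  assumes M: "M \<ge> 2^l + 1"
  shows "(if \<not> X 0 \<theta> then M else 0) + (\<Sum>i<l. \<Sum>m<(2::nat)^i. Tc X Y M i (\<theta> + 2 * of_nat m))
      + (\<Sum>n<2*(2^l+1). if X l (\<theta> + of_nat n - 1) then 1 else 0)
    \<ge> 2^l + (if \<exists>m<(2::nat)^l. \<not> X l (\<theta> + 2 * of_nat m) then 1 else 0)
      + (\<Sum>m<(2::nat)^l+1. if X l (\<theta> + 2 * of_nat m - 1) then 1 else (0::real))"
proof -
  have M0: "M \<ge> 0" using M by (smt (verit) zero_le_power)
  have cl: "Af X Y M l 0 \<theta> = (\<Sum>i<l. \<Sum>m<(2::nat)^i. Tc X Y M i (\<theta> + 2 * of_nat m))
     + (\<Sum>m<(2::nat)^l. if X l (\<theta> + 2 * of_nat m) then 1 else 0)"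
    using Af_closed[of X Y M l 0 \<theta>] by simp
  have sp: "(\<Sum>n<2*(2^l+1). if X l (\<theta> + of_nat n - 1) then 1 else (0::real))
     = (\<Sum>m<(2::nat)^l+1. if X l (\<theta> + 2 * of_nat m - 1) then 1 else 0)
     + (\<Sum>m<(2::nat)^l+1. if X l (\<theta> + 2 * of_nat m) then 1 else 0)"
    by (subst sum_even_odd) (simp add: algebra_simps)
  have ex: "(\<Sum>m<(2::nat)^l+1. if X l (\<theta> + 2 * of_nat m) then 1 else (0::real))
     \<ge> (\<Sum>m<(2::nat)^l. if X l (\<theta> + 2 * of_nat m) then 1 else 0)"
    by (simp add: sum_mono2)
  have Aeq: "Af X Y M l 0 \<theta> \<ge> 0" using Af_nonneg M0 by blast
  have AL: "X 0 \<theta> \<Longrightarrow> Af X Y M l 0 \<theta> \<ge> 2^l + (if \<exists>m<(2::nat)^l. \<not> X l (\<theta> + 2 * of_nat m) then 1 else 0)"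
    using Af_lower[OF M, of X 0 \<theta> Y] by simp
  show ?thesis
  proof (cases "X 0 \<theta>")
    case True
    then show ?thesis using cl sp ex AL by simp
  next
    case False
    have "(if \<exists>m<(2::nat)^l. \<not> X l (\<theta> + 2 * of_nat m) then 1 else 0) \<le> (1::real)" by simp
    then show ?thesis using False cl sp ex Aeq M by simp
  qed
qed


definition xv :: "nat \<Rightarrow> nat" where "xv i = 2*i+1"
definition yv :: "nat \<Rightarrow> nat" where "yv i = 2*i+2"

lemma v_simps[simp]:
  "xv i = xv j \<longleftrightarrow> i = j" "yv i = yv j \<longleftrightarrow> i = j" "xv i \<noteq> yv j" "yv j \<noteq> xv i"
  "xv i \<noteq> 0" "0 \<noteq> xv i" "yv i \<noteq> 0" "0 \<noteq> yv i"
  unfolding xv_def yv_def by presburger+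

definition Vn :: "nat \<Rightarrow> nat set" where "Vn l = {0..yv l}"
definition Wn :: "nat \<Rightarrow> (nat \<times> nat) set" where
  "Wn l = (\<Union>i<l. {(xv i, xv (Suc i)), (xv i, yv i), (yv i, xv (Suc i))})"
definition En :: "nat \<Rightarrow> (nat \<times> nat) set" where
  "En l = insert (0, xv 0) (insert (xv l, yv l) (Wn l))"
definition tau :: "nat \<Rightarrow> nat \<times> nat \<Rightarrow> 'a::linordered_idom" where
  "tau l e = (if odd (fst e) \<and> snd e = fst e + 1 \<and> fst e < 2*l+1 then 2^((fst e + 1) div 2) else 0)"
definition ucap :: "nat \<Rightarrow> nat \<times> nat \<Rightarrow> 'a::linordered_idom \<Rightarrow> real" where
  "ucap l e \<theta> = (if e = (0, xv 0) then (if 0 \<le> \<theta> \<and> \<theta> < 1 then 2^Suc l else 0)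
     else if e = (xv l, yv l) then 1 else 2^Suc l)"

lemma finite_Wn: "finite (Wn l)" unfolding Wn_def by auto
lemma finite_En: "finite (En l)" unfolding En_def using finite_Wn by auto

lemma Wn_Suc: "Wn (Suc l) = Wn l \<union> {(xv l, xv (Suc l)), (xv l, yv l), (yv l, xv (Suc l))}"
  unfolding Wn_def by (auto simp: lessThan_Suc)

lemma Wn_fst: "e \<in> Wn l \<Longrightarrow> fst e \<le> 2*l" unfolding Wn_def xv_def yv_def by auto
lemma Wn_lt: "e \<in> Wn l \<Longrightarrow> fst e < snd e" unfolding Wn_def xv_def yv_def by auto
lemma Wn_pos: "e \<in> Wn l \<Longrightarrow> fst e \<ge> 1" unfolding Wn_def xv_def yv_def by auto

lemma sum_Wn: "(\<Sum>e\<in>Wn l. F e) = (\<Sum>i<l. F (xv i, xv (Suc i)) + F (xv i, yv i) + F (yv i, xv (Suc i)))"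
proof (induction l)
  case 0
  then show ?case by (simp add: Wn_def)
next
  case (Suc l)
  have d: "Wn l \<inter> {(xv l, xv (Suc l)), (xv l, yv l), (yv l, xv (Suc l))} = {}" using Wn_fst
    unfolding xv_def yv_def by fastforce
  have "(\<Sum>e\<in>Wn (Suc l). F e) = (\<Sum>e\<in>Wn l. F e) + (\<Sum>e\<in>{(xv l, xv (Suc l)), (xv l, yv l), (yv l, xv (Suc l))}. F e)"
    unfolding Wn_Suc by (rule sum.union_disjoint) (use d finite_Wn in auto)
  also have "(\<Sum>e\<in>{(xv l, xv (Suc l)), (xv l, yv l), (yv l, xv (Suc l))}. F e) = F (xv l, xv (Suc l)) + F (xv l, yv l) + F (yv l, xv (Suc l))"
    by (simp add: add.assoc)
  finally show ?case using Suc by simp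
qed

lemma sum_En: "(\<Sum>e\<in>En l. F e) = F (0, xv 0) + F (xv l, yv l) + (\<Sum>i<l. F (xv i, xv (Suc i)) + F (xv i, yv i) + F (yv i, xv (Suc i)))"
proof -
  have 1: "(0, xv 0) \<notin> insert (xv l, yv l) (Wn l)" using Wn_pos by fastforce
  have 2: "(xv l, yv l) \<notin> Wn l" using Wn_fst unfolding xv_def by fastforce
  show ?thesis unfolding En_def using 1 2 finite_Wn by (simp add: sum_Wn add.assoc)
qed

lemma En_lt: "e \<in> En l \<Longrightarrow> fst e < snd e" unfolding En_def using Wn_lt by (auto simp: xv_def yv_def)

lemma En_sub: "En l \<subseteq> Vn l \<times> Vn l" unfolding En_def Vn_def Wn_def xv_def yv_def by auto

lemma En_mem:
  "(0, xv 0) \<in> En l" "(xv l, yv l) \<in> En l"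
  "i < l \<Longrightarrow> (xv i, xv (Suc i)) \<in> En l" "i < l \<Longrightarrow> (xv i, yv i) \<in> En l" "i < l \<Longrightarrow> (yv i, xv (Suc i)) \<in> En l"
  unfolding En_def Wn_def by auto

lemma tau_xy: "i < l \<Longrightarrow> tau l (xv i, yv i) = (2::'a::linordered_idom)^Suc i"
  unfolding tau_def xv_def yv_def by simp

lemma tau_simps:
  "tau l (0, xv 0) = (0::'a::linordered_idom)"
  "tau l (xv l, yv l) = (0::'a::linordered_idom)"
  "tau l (xv i, xv (Suc i)) = (0::'a::linordered_idom)"
  "tau l (yv i, xv (Suc i)) = (0::'a::linordered_idom)"
  unfolding tau_def xv_def yv_def by auto

lemma tau_nonneg: "tau l e \<ge> (0::'a::linordered_idom)" unfolding tau_def by auto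

lemma tau_le: "e \<in> En l \<Longrightarrow> tau l e \<le> (2::'a::linordered_idom)^l"
proof -
  assume e: "e \<in> En l"
  have "(2::'a)^Suc i \<le> 2^l" if "i < l" for i by (rule power_increasing) (use that in auto)
  then show ?thesis using e unfolding En_def Wn_def
    by (auto simp: tau_simps tau_xy)
qed

lemma ucap_simps:
  "ucap l (xv l, yv l) \<theta> = 1"
  "ucap l (xv i, xv (Suc i)) \<theta> = 2^Suc l"
  "i < l \<Longrightarrow> ucap l (xv i, yv i) \<theta> = 2^Suc l"
  "ucap l (yv i, xv (Suc i)) \<theta> = 2^Suc l"
  "ucap l (0, xv 0) \<theta> = (if 0 \<le> \<theta> \<and> \<theta> < 1 then 2^Suc l else 0)"
  unfolding ucap_def by auto

lemma in_x0: "{e \<in> En l. snd e = xv 0} = {(0, xv 0)}"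
  unfolding En_def Wn_def by auto
lemma out_s: "{e \<in> En l. fst e = 0} = {(0, xv 0)}"
  unfolding En_def Wn_def by auto
lemma in_s: "{e \<in> En l. snd e = 0} = {}"
  unfolding En_def Wn_def by auto
lemma out_x: "j < l \<Longrightarrow> {e \<in> En l. fst e = xv j} = {(xv j, xv (Suc j)), (xv j, yv j)}"
  unfolding En_def Wn_def by auto
lemma out_xl: "{e \<in> En l. fst e = xv l} = {(xv l, yv l)}"
  unfolding En_def Wn_def by auto
lemma in_x: "i < l \<Longrightarrow> {e \<in> En l. snd e = xv (Suc i)} = {(xv i, xv (Suc i)), (yv i, xv (Suc i))}"
  unfolding En_def Wn_def by auto
lemma in_y: "i < l \<Longrightarrow> {e \<in> En l. snd e = yv i} = {(xv i, yv i)}"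
  unfolding En_def Wn_def by auto
lemma out_y: "i < l \<Longrightarrow> {e \<in> En l. fst e = yv i} = {(yv i, xv (Suc i))}"
  unfolding En_def Wn_def by auto

lemma Vn_cases:
  assumes "v \<in> Vn l - {0, yv l}"
  obtains "v = xv 0" | i where "i < l" "v = xv (Suc i)" | i where "i < l" "v = yv i"
proof -
  have v: "1 \<le> v" "v \<le> 2*l+1" using assms unfolding Vn_def yv_def by auto
  show thesis
  proof (cases "odd v")
    case True
    then obtain j where j: "v = 2*j+1" by (metis oddE)
    show thesis
    proof (cases j)
      case 0 then show thesis using j that(1) by (simp add: xv_def)
    next
      case (Suc i) then show thesis using j that(2)[of i] v by (simp add: xv_def)
    qed
  next
    case False
    then obtain j where j: "v = 2*j" by (metis evenE)
    then obtain i where "j = Suc i" using v by (cases j) auto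
    then show thesis using j that(3)[of i] v by (simp add: yv_def)
  qed
qed

lemma Vn_inner_mem:
  "xv 0 \<in> Vn l - {0, yv l}" "i < l \<Longrightarrow> xv (Suc i) \<in> Vn l - {0, yv l}" "i < l \<Longrightarrow> yv i \<in> Vn l - {0, yv l}"
  unfolding Vn_def xv_def yv_def by auto


definition OutF :: "nat \<Rightarrow> (nat \<times> nat \<Rightarrow> 'a \<Rightarrow> real) \<Rightarrow> nat \<Rightarrow> 'a \<Rightarrow> real" where
  "OutF l g i \<theta> = (if i < l then g (xv i, xv (Suc i)) \<theta> + g (xv i, yv i) \<theta> else g (xv l, yv l) \<theta>)"

definition ConsF :: "nat \<Rightarrow> (nat \<times> nat \<Rightarrow> 'a::linordered_idom \<Rightarrow> real) \<Rightarrow> bool" where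
  "ConsF l g \<longleftrightarrow> (\<forall>v\<in>Vn l - {0, yv l}. \<forall>\<theta>.
        (\<Sum>e\<in>{e\<in>En l. snd e = v}. g e (\<theta> - tau l e)) = (\<Sum>e\<in>{e\<in>En l. fst e = v}. g e \<theta>))"

lemma outsum: "j \<le> l \<Longrightarrow> (\<Sum>e\<in>{e\<in>En l. fst e = xv j}. g e \<theta>) = OutF l g j \<theta>"
proof (cases "j < l")
  case True
  then show ?thesis by (simp add: out_x OutF_def)
next
  case False
  assume "j \<le> l" then have "j = l" using False by simp
  then show ?thesis by (simp add: out_xl OutF_def)
qed

lemma cons_unpack:
  fixes g :: "nat \<times> nat \<Rightarrow> 'a::linordered_idom \<Rightarrow> real"
  assumes cons: "ConsF l g"
  shows "g (0, xv 0) \<theta> = OutF l g 0 \<theta>"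
    and "i < l \<Longrightarrow> g (xv i, xv (Suc i)) \<theta> + g (xv i, yv i) (\<theta> - 2^Suc i) = OutF l g (Suc i) \<theta>"
proof -
  have c: "(\<Sum>e\<in>{e\<in>En l. snd e = v}. g e (\<theta> - tau l e)) = (\<Sum>e\<in>{e\<in>En l. fst e = v}. g e \<theta>)"
    if "v \<in> Vn l - {0, yv l}" for v \<theta>
    using cons that unfolding ConsF_def by blast
  show "g (0, xv 0) \<theta> = OutF l g 0 \<theta>"
    using c[OF Vn_inner_mem(1), of \<theta>] outsum[of 0 l g \<theta>] by (simp add: in_x0 tau_simps)
  assume il: "i < l"
  have y: "g (xv i, yv i) (\<theta> - 2^Suc i) = g (yv i, xv (Suc i)) \<theta>"
    using c[OF Vn_inner_mem(3)[OF il], of \<theta>] il by (simp add: in_y out_y tau_xy)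
  have x: "g (xv i, xv (Suc i)) \<theta> + g (yv i, xv (Suc i)) \<theta> = OutF l g (Suc i) \<theta>"
    using c[OF Vn_inner_mem(2)[OF il], of \<theta>] il outsum[of "Suc i" l g \<theta>] by (simp add: in_x tau_simps)
  show "g (xv i, xv (Suc i)) \<theta> + g (xv i, yv i) (\<theta> - 2^Suc i) = OutF l g (Suc i) \<theta>"
    using x y by simp
qed

lemma flow_main:
  fixes g :: "nat \<times> nat \<Rightarrow> 'a::linordered_idom \<Rightarrow> real"
  assumes cons: "ConsF l g"
    and cap: "\<forall>e\<in>En l. \<forall>\<theta>. 0 \<le> g e \<theta> \<and> g e \<theta> \<le> ucap l e \<theta>"
  shows "\<And>\<theta>. \<not> Pset l \<theta> \<Longrightarrow> g (xv l, yv l) \<theta> = 0"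
    and "\<And>\<theta>0. 0 \<le> \<theta>0 \<Longrightarrow> \<theta>0 < 1 \<Longrightarrow> g (0, xv 0) \<theta>0 = (\<Sum>m<(2::nat)^l. g (xv l, yv l) (\<theta>0 + 2 * of_nat m))"
    and "\<And>\<theta>. \<not> (0 \<le> \<theta> \<and> \<theta> < 1) \<Longrightarrow> g (0, xv 0) \<theta> = 0"
    and "\<And>\<theta>. 0 \<le> g (xv l, yv l) \<theta> \<and> g (xv l, yv l) \<theta> \<le> 1"
proof -
  have rs: "\<And>\<theta>. \<not> (0 \<le> \<theta> \<and> \<theta> < 1) \<Longrightarrow> g (0, xv 0) \<theta> = 0"
    using cap En_mem(1)[of l] by (smt (verit) ucap_simps(5))
  note ft = flow_tree[where r = "g (0, xv 0)" and a = "\<lambda>i. g (xv i, xv (Suc i))" and b = "\<lambda>i. g (xv i, yv i)"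
     and Ou = "OutF l g" and l = l]
  have a: "\<And>i \<theta>. i < l \<Longrightarrow> 0 \<le> g (xv i, xv (Suc i)) \<theta>" using cap En_mem(3) by blast
  have b: "\<And>i \<theta>. i < l \<Longrightarrow> 0 \<le> g (xv i, yv i) \<theta>" using cap En_mem(4) by blast
  have oi: "\<And>i \<theta>. i < l \<Longrightarrow> OutF l g i \<theta> = g (xv i, xv (Suc i)) \<theta> + g (xv i, yv i) \<theta>"
    by (simp add: OutF_def)
  note ft' = ft[OF a b oi rs cons_unpack(1)[OF cons] cons_unpack(2)[OF cons]]
  have ol: "OutF l g l \<theta> = g (xv l, yv l) \<theta>" for \<theta> by (simp add: OutF_def)
  show "\<And>\<theta>. \<not> Pset l \<theta> \<Longrightarrow> g (xv l, yv l) \<theta> = 0" using ft'(1)[of l] ol by simp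
  show "\<And>\<theta>0. 0 \<le> \<theta>0 \<Longrightarrow> \<theta>0 < 1 \<Longrightarrow> g (0, xv 0) \<theta>0 = (\<Sum>m<(2::nat)^l. g (xv l, yv l) (\<theta>0 + 2 * of_nat m))"
    using ft'(2)[of l] ol by simp
  show "\<And>\<theta>. \<not> (0 \<le> \<theta> \<and> \<theta> < 1) \<Longrightarrow> g (0, xv 0) \<theta> = 0" by (rule rs)
  show "\<And>\<theta>. 0 \<le> g (xv l, yv l) \<theta> \<and> g (xv l, yv l) \<theta> \<le> 1"
    using cap En_mem(2)[of l] ucap_simps(1)[of l] by metis
qed

definition gstar :: "nat \<Rightarrow> nat \<times> nat \<Rightarrow> 'a::linordered_idom \<Rightarrow> real" where
  "gstar l e \<theta> = (if e = (0, xv 0) then (if 0 \<le> \<theta> \<and> \<theta> < 1 then 2^l else 0)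
     else if e = (xv l, yv l) then (if Pset l \<theta> then 1 else 0)
     else if odd (fst e) then (if Pset (fst e div 2) \<theta> then 2^(l - Suc (fst e div 2)) else 0)
     else (if Pset ((fst e - 2) div 2) (\<theta> - 2^(fst e div 2)) then 2^(l - fst e div 2) else 0))"

lemma vdiv: "odd (xv i)" "\<not> odd (yv i)" "xv i div 2 = i" "yv i div 2 = Suc i" "(yv i - 2) div 2 = i"
  unfolding xv_def yv_def by auto

lemma gstar_simps:
  "gstar l (0, xv 0) \<theta> = (if 0 \<le> \<theta> \<and> \<theta> < 1 then 2^l else 0)"
  "gstar l (xv l, yv l) \<theta> = (if Pset l \<theta> then 1 else 0)"
  "gstar l (xv i, xv (Suc i)) \<theta> = (if Pset i \<theta> then 2^(l - Suc i) else 0)"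
  "i < l \<Longrightarrow> gstar l (xv i, yv i) \<theta> = (if Pset i \<theta> then 2^(l - Suc i) else 0)"
  "gstar l (yv i, xv (Suc i)) \<theta> = (if Pset i (\<theta> - 2^Suc i) then 2^(l - Suc i) else 0)"
  unfolding gstar_def by (simp_all add: vdiv)

lemma gstar_cons: "ConsF l (gstar l :: nat \<times> nat \<Rightarrow> 'a::linordered_idom \<Rightarrow> real)"
  unfolding ConsF_def
proof (intro ballI allI)
  fix v and \<theta> :: 'a
  assume v: "v \<in> Vn l - {0, yv l}"
  then show "(\<Sum>e\<in>{e\<in>En l. snd e = v}. gstar l e (\<theta> - tau l e)) = (\<Sum>e\<in>{e\<in>En l. fst e = v}. gstar l e \<theta>)"
  proof (cases rule: Vn_cases)
    case 1
    have "(\<Sum>e\<in>{e\<in>En l. fst e = xv 0}. gstar l e \<theta>) = OutF l (gstar l) 0 \<theta>"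
      by (rule outsum) simp
    also have "\<dots> = (if 0 \<le> \<theta> \<and> \<theta> < 1 then 2^l else 0)"
    proof (cases "0 < l")
      case True
      have "(2::real)^(l - Suc 0) + 2^(l - Suc 0) = 2^l" using True
        by (metis Suc_pred mult_2 power_Suc)
      then show ?thesis using True by (simp add: OutF_def gstar_simps Pset_0)
    next
      case False
      then show ?thesis by (simp add: OutF_def gstar_simps Pset_0)
    qed
    finally show ?thesis using 1 by (simp add: in_x0 tau_simps gstar_simps)
  next
    case (2 i)
    have "(\<Sum>e\<in>{e\<in>En l. fst e = xv (Suc i)}. gstar l e \<theta>) = OutF l (gstar l) (Suc i) \<theta>"
      by (rule outsum) (use 2 in simp)
    also have "\<dots> = (if Pset (Suc i) \<theta> then 2^(l - Suc i) else 0)"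
    proof (cases "Suc i < l")
      case True
      have "(2::real)^(l - Suc (Suc i)) + 2^(l - Suc (Suc i)) = 2^(l - Suc i)" using True
        by (metis Suc_diff_Suc mult_2 power_Suc)
      then show ?thesis using True by (simp add: OutF_def gstar_simps)
    next
      case False
      then have "l = Suc i" using 2 by simp
      then show ?thesis by (simp add: OutF_def gstar_simps)
    qed
    also have "\<dots> = (if Pset i \<theta> then 2^(l - Suc i) else 0) + (if Pset i (\<theta> - 2^Suc i) then 2^(l - Suc i) else 0)"
      using Pset_Suc[of i \<theta>] Pset_disj[of i \<theta>] by auto
    finally show ?thesis using 2 by (simp add: in_x tau_simps gstar_simps)
  next
    case (3 i)
    then show ?thesis by (simp add: in_y out_y tau_xy gstar_simps)
  qed
qed

lemma gstar_cap: "e \<in> En l \<Longrightarrow> 0 \<le> gstar l e \<theta> \<and> gstar l e \<theta> \<le> ucap l e \<theta>"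
proof -
  assume e: "e \<in> En l"
  have p: "(2::real)^(l - Suc i) \<le> 2^Suc l" for i by (rule power_increasing) auto
  have q: "(2::real)^l \<le> 2^Suc l" by (rule power_increasing) auto
  show ?thesis using e p q unfolding En_def Wn_def
    by (auto simp: gstar_simps ucap_simps)
qed

lemma gstar_window:
  assumes "e \<in> En l" "gstar l e \<theta> \<noteq> 0"
  shows "0 \<le> \<theta> \<and> \<theta> + tau l e \<le> (2::'a::linordered_idom)^Suc l"
proof -
  have pm: "(2::'a)^Suc i \<le> 2^Suc l" if "i \<le> l" for i by (rule power_increasing) (use that in auto)
  have pm2: "(2::'a)^Suc i + 2^Suc i \<le> 2^Suc l" if "i < l" for i
  proof -
    have "(2::'a)^Suc i + 2^Suc i = 2^Suc (Suc i)" by simp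
    also have "\<dots> \<le> 2^Suc l" by (rule power_increasing) (use that in auto)
    finally show ?thesis .
  qed
  have one: "(1::'a) \<le> 2^Suc l" by (metis one_le_numeral one_le_power)
  from assms(1) consider "e = (0, xv 0)" | "e = (xv l, yv l)" | i where "i < l" "e \<in> {(xv i, xv (Suc i)), (xv i, yv i), (yv i, xv (Suc i))}"
    unfolding En_def Wn_def by blast
  then show ?thesis
  proof cases
    case 1 then show ?thesis using assms(2) one
      by (auto simp: gstar_simps tau_simps split: if_splits)
  next
    case 2 then show ?thesis using assms(2) Pset_bounds[of l \<theta>]
      by (auto simp: gstar_simps tau_simps split: if_splits)
  next
    case (3 i)
    then have il: "i < l" and ei: "e \<in> {(xv i, xv (Suc i)), (xv i, yv i), (yv i, xv (Suc i))}" by auto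
    show ?thesis
      using ei assms(2) il Pset_bounds[of i \<theta>] Pset_bounds[of i "\<theta> - 2^Suc i"] pm[of i] pm2[of i]
      by (auto simp: gstar_simps tau_simps tau_xy split: if_splits)
  qed
qed


definition cfun :: "nat \<Rightarrow> (nat \<Rightarrow> 'a \<Rightarrow> bool) \<Rightarrow> nat \<times> nat \<Rightarrow> 'a::linordered_idom \<Rightarrow> real" where
  "cfun l S e \<theta> = (if S (fst e) \<theta> \<and> \<not> S (snd e) (\<theta> + tau l e) then ucap l e \<theta> else 0)"

definition Sstar :: "nat \<Rightarrow> nat \<Rightarrow> 'a::linordered_idom \<Rightarrow> bool" where
  "Sstar l v \<theta> = (if v = 0 then True else if v = yv l then False else if odd v then Pset (v div 2) \<theta>
      else Pset ((v-2) div 2) (\<theta> - 2^(v div 2)))"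

lemma Sstar_simps:
  "Sstar l 0 \<theta> = True" "Sstar l (yv l) \<theta> = False" "Sstar l (xv i) \<theta> = Pset i \<theta>"
  "i < l \<Longrightarrow> Sstar l (yv i) \<theta> = Pset i (\<theta> - 2^Suc i)"
  unfolding Sstar_def by (simp_all add: vdiv)

lemma cfun_nonneg: "0 \<le> cfun l S e \<theta>"
  unfolding cfun_def ucap_def by auto

lemma cfun_le: "cfun l S e \<theta> \<le> 2^Suc l"
proof -
  have "(1::real) \<le> 2^Suc l" by (metis one_le_numeral one_le_power)
  then show ?thesis unfolding cfun_def ucap_def by auto
qed

lemma cfun_Sstar: "e \<in> En l \<Longrightarrow> cfun l (Sstar l) e \<theta> = (if e = (xv l, yv l) \<and> Pset l \<theta> then 1 else 0)"
proof -
  assume e: "e \<in> En l"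
  have sub: "\<And>i. Pset i \<theta> \<Longrightarrow> Pset (Suc i) \<theta>" "\<And>i. Pset i (\<theta> - 2^Suc i) \<Longrightarrow> Pset (Suc i) \<theta>"
    using Pset_Suc by blast+
  from e consider "e = (0, xv 0)" | "e = (xv l, yv l)" | i where "i < l" "e \<in> {(xv i, xv (Suc i)), (xv i, yv i), (yv i, xv (Suc i))}"
    unfolding En_def Wn_def by blast
  then show ?thesis
  proof cases
    case 1 then show ?thesis by (simp add: cfun_def Sstar_simps tau_simps ucap_simps Pset_0)
  next
    case 2 then show ?thesis by (simp add: cfun_def Sstar_simps tau_simps ucap_simps)
  next
    case (3 i)
    then show ?thesis using sub[of i]
      by (auto simp: cfun_def Sstar_simps tau_simps tau_xy ucap_simps)
  qed
qed

definition Jf :: "nat \<Rightarrow> (nat \<Rightarrow> 'a \<Rightarrow> bool) \<Rightarrow> 'a::linordered_idom \<Rightarrow> real" where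
  "Jf l S \<theta> = cfun l S (0, xv 0) \<theta>
     + (\<Sum>n<2*(2^l+1). cfun l S (xv l, yv l) (\<theta> + of_nat n - 1))
     + (\<Sum>i<l. (\<Sum>m<(2::nat)^i. cfun l S (xv i, xv (Suc i)) (\<theta> + 2 * of_nat m))
             + (\<Sum>m<(2::nat)^i. cfun l S (xv i, yv i) (\<theta> + 2 * of_nat m))
             + (\<Sum>m<(2::nat)^i. cfun l S (yv i, xv (Suc i)) (\<theta> + 2 * of_nat m + 2^Suc i)))"

lemma J_lower:
  fixes S :: "nat \<Rightarrow> 'a::linordered_idom \<Rightarrow> bool"
  assumes th: "0 \<le> \<theta>" "\<theta> < 1" and s: "S 0 \<theta>" and t: "\<And>n. n < 2*(2^l+1) \<Longrightarrow> \<not> S (yv l) (\<theta> + of_nat n - 1)"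
  shows "Jf l S \<theta> \<ge> 2^l + (if \<exists>m<(2::nat)^l. \<not> S (xv l) (\<theta> + 2 * of_nat m) then 1 else 0)
      + (\<Sum>m<(2::nat)^l+1. if S (xv l) (\<theta> + 2 * of_nat m - 1) then 1 else (0::real))"
proof -
  define X where "X i \<theta> = S (xv i) \<theta>" for i \<theta>
  define Y where "Y i \<theta> = S (yv i) \<theta>" for i \<theta>
  have M: "(2::real)^Suc l \<ge> 2^l + 1"
  proof -
    have "(1::real) \<le> 2^l" by (metis one_le_numeral one_le_power)
    then show ?thesis by simp
  qed
  have e1: "cfun l S (0, xv 0) \<theta> = (if \<not> X 0 \<theta> then 2^Suc l else 0)"
    using th s by (simp add: cfun_def X_def tau_simps ucap_simps)
  have e2: "(\<Sum>n<2*(2^l+1). cfun l S (xv l, yv l) (\<theta> + of_nat n - 1))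
      = (\<Sum>n<2*(2^l+1). if X l (\<theta> + of_nat n - 1) then 1 else 0)"
    by (rule sum.cong) (use t in \<open>auto simp: cfun_def X_def tau_simps ucap_simps\<close>)
  have e3: "(\<Sum>m<(2::nat)^i. cfun l S (xv i, xv (Suc i)) (\<theta> + 2 * of_nat m))
             + (\<Sum>m<(2::nat)^i. cfun l S (xv i, yv i) (\<theta> + 2 * of_nat m))
             + (\<Sum>m<(2::nat)^i. cfun l S (yv i, xv (Suc i)) (\<theta> + 2 * of_nat m + 2^Suc i))
       = (\<Sum>m<(2::nat)^i. Tc X Y (2^Suc l) i (\<theta> + 2 * of_nat m))" if "i < l" for i
    using that by (simp add: sum.distrib[symmetric] Tc_def cfun_def X_def Y_def tau_simps tau_xy ucap_simps cong: if_cong)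
  have "Jf l S \<theta> = (if \<not> X 0 \<theta> then 2^Suc l else 0) + (\<Sum>i<l. \<Sum>m<(2::nat)^i. Tc X Y (2^Suc l) i (\<theta> + 2 * of_nat m))
      + (\<Sum>n<2*(2^l+1). if X l (\<theta> + of_nat n - 1) then 1 else 0)"
    unfolding Jf_def e1 e2 using e3 by simp
  also have "\<dots> \<ge> 2^l + (if \<exists>m<(2::nat)^l. \<not> X l (\<theta> + 2 * of_nat m) then 1 else 0)
      + (\<Sum>m<(2::nat)^l+1. if X l (\<theta> + 2 * of_nat m - 1) then 1 else (0::real))"
    by (rule Jbound[OF M])
  finally show ?thesis unfolding X_def .
qed

lemma sum_le_card_eq:
  fixes z :: "nat \<Rightarrow> real"
  assumes "finite A" "\<And>m. m \<in> A \<Longrightarrow> z m \<le> 1" "(\<Sum>m\<in>A. z m) \<ge> real (card A)"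
  shows "\<And>m. m \<in> A \<Longrightarrow> z m = 1"
proof -
  have "(\<Sum>m\<in>A. 1 - z m) \<le> 0" using assms(3) by (simp add: sum_subtractf)
  moreover have "\<And>m. m \<in> A \<Longrightarrow> 0 \<le> 1 - z m" using assms(2) by simp
  ultimately have "\<forall>m\<in>A. 1 - z m = 0" using sum_nonneg_eq_0_iff[OF assms(1)]
    by (metis (no_types, lifting) order_antisym_conv sum_nonneg)
  then show "\<And>m. m \<in> A \<Longrightarrow> z m = 1" by simp
qed


lemma nchanges_d_ge:
  assumes "inj_on p K" "finite K" "p ` K \<subseteq> changes_d g"
  shows "enat (card K) \<le> nchanges_d g"
proof (cases "finite (changes_d g)")
  case True
  then have "card (p ` K) \<le> card (changes_d g)" using assms(3) by (rule card_mono)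
  then show ?thesis using True assms(1) by (simp add: nchanges_d_def card_image)
next
  case False then show ?thesis by (simp add: nchanges_d_def)
qed

lemma enat_pow2: "enat (card {..<(2::nat)^l}) = 2^l"
  by (simp add: of_nat_eq_enat[symmetric])

lemma sum_reindex_le:
  fixes h :: "int \<Rightarrow> real"
  assumes "finite I" "inj_on ofs I" "ofs ` I \<subseteq> {a..b}" "\<And>\<theta>. 0 \<le> h \<theta>"
  shows "(\<Sum>m\<in>I. h (ofs m)) \<le> (\<Sum>\<theta>\<in>{a..b}. h \<theta>)"
proof -
  have "(\<Sum>m\<in>I. h (ofs m)) = (\<Sum>\<theta>\<in>ofs ` I. h \<theta>)" using sum.reindex[OF assms(2), of h] by (simp add: comp_def)
  also have "\<dots> \<le> (\<Sum>\<theta>\<in>{a..b}. h \<theta>)" by (rule sum_mono2) (use assms in auto)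
  finally show ?thesis .
qed

lemma flow_value_d_eq:
  "flow_value_d (En l) 0 (tau l) a b h = (\<Sum>\<theta>\<in>{a..b}. h (0, xv 0) \<theta>)"
  unfolding flow_value_d_def by (simp add: out_s in_s)

lemma sum_single_int:
  fixes h :: "int \<Rightarrow> real"
  assumes "a \<le> 0" "0 \<le> b" "\<And>\<theta>. \<theta> \<noteq> 0 \<Longrightarrow> h \<theta> = 0"
  shows "(\<Sum>\<theta>\<in>{a..b}. h \<theta>) = h 0"
proof -
  have "(\<Sum>\<theta>\<in>{a..b}. h \<theta>) = (\<Sum>\<theta>\<in>{a..b}. if \<theta> = 0 then h 0 else 0)"
    by (rule sum.cong) (use assms(3) in auto)
  also have "\<dots> = h 0" using assms(1,2) by simp
  finally show ?thesis .
qed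

lemma int01: "(0 \<le> (\<theta>::int) \<and> \<theta> < 1) \<longleftrightarrow> \<theta> = 0" by auto

lemma maxflow_d:
  assumes mf: "is_max_flow_inf_d (Vn l) (En l) 0 (yv l) (tau l) (ucap l) f"
  shows "2^l \<le> flow_complexity_d (En l) f"
proof -
  obtain a b where ab: "a \<le> b" and H: "\<forall>j1 j2. j1 \<le> a \<and> b \<le> j2 \<longrightarrow>
           (\<exists>k1 k2 g. k1 \<le> j1 \<and> j2 \<le> k2 \<and> is_max_flow_d (Vn l) (En l) 0 (yv l) (tau l) (ucap l) k1 k2 g \<and>
              (\<forall>e\<in>En l. \<forall>\<theta>\<in>{j1..j2}. g e \<theta> = f e \<theta>))"
    using mf unfolding is_max_flow_inf_d_def by blast
  define j1 :: int where "j1 = min a (-1)"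
  define j2 :: int where "j2 = max b (2^Suc l + 1)"
  obtain k1 k2 g where k: "k1 \<le> j1" "j2 \<le> k2" and g: "is_max_flow_d (Vn l) (En l) 0 (yv l) (tau l) (ucap l) k1 k2 g"
    and agree: "\<forall>e\<in>En l. \<forall>\<theta>\<in>{j1..j2}. g e \<theta> = f e \<theta>"
  proof -
    have "j1 \<le> a \<and> b \<le> j2" by (simp add: j1_def j2_def)
    then show ?thesis using H that by blast
  qed
  have gf: "is_flow_d (Vn l) (En l) 0 (yv l) (tau l) (ucap l) k1 k2 g" using g unfolding is_max_flow_d_def by blast
  have cons: "ConsF l g" using gf unfolding is_flow_d_def ConsF_def by blast
  have cap: "\<forall>e\<in>En l. \<forall>\<theta>. 0 \<le> g e \<theta> \<and> g e \<theta> \<le> ucap l e \<theta>" using gf unfolding is_flow_d_def by (rule conjunct1)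
  have k1: "k1 \<le> -1" using k(1) unfolding j1_def by linarith
  have k2: "2^Suc l + 1 \<le> k2" using k(2) unfolding j2_def by (rule order_trans[OF max.cobounded2])
  have "(0::int) \<le> 2^Suc l" by simp
  then have k2': "0 \<le> k2" using k2 by linarith
  have gs: "is_flow_d (Vn l) (En l) 0 (yv l) (tau l) (ucap l) k1 k2 (gstar l)"
    unfolding is_flow_d_def
  proof (intro conjI)
    show "\<forall>e\<in>En l. \<forall>\<theta>. 0 \<le> gstar l e \<theta> \<and> gstar l e \<theta> \<le> ucap l e \<theta>" using gstar_cap by blast
    show "\<forall>e\<in>En l. \<forall>\<theta>. \<not> (k1 \<le> \<theta> \<and> \<theta> + tau l e \<le> k2) \<longrightarrow> gstar l e \<theta> = 0"
    proof (intro ballI allI impI)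
      fix e \<theta> assume e: "e \<in> En l" and nw: "\<not> (k1 \<le> \<theta> \<and> \<theta> + tau l e \<le> k2)"
      show "gstar l e \<theta> = 0"
      proof (rule ccontr)
        assume "gstar l e \<theta> \<noteq> 0"
        then have "0 \<le> \<theta> \<and> \<theta> + tau l e \<le> 2^Suc l" by (rule gstar_window[OF e])
        then show False using nw k1 k2 by linarith
      qed
    qed
    show "\<forall>v\<in>Vn l - {0, yv l}. \<forall>\<theta>. (\<Sum>e\<in>{e \<in> En l. snd e = v}. gstar l e (\<theta> - tau l e)) = (\<Sum>e\<in>{e \<in> En l. fst e = v}. gstar l e \<theta>)"
      using gstar_cons[of l] unfolding ConsF_def by blast
  qed
  have vle: "flow_value_d (En l) 0 (tau l) k1 k2 (gstar l) \<le> flow_value_d (En l) 0 (tau l) k1 k2 g"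
    using g gs unfolding is_max_flow_d_def by blast
  have v1: "flow_value_d (En l) 0 (tau l) k1 k2 (gstar l) = 2^l"
    unfolding flow_value_d_eq using k1 k2' by (subst sum_single_int) (auto simp: gstar_simps)
  have r0: "\<And>\<theta>::int. \<theta> \<noteq> 0 \<Longrightarrow> g (0, xv 0) \<theta> = 0" using flow_main(3)[OF cons cap] int01 by blast
  have v2: "flow_value_d (En l) 0 (tau l) k1 k2 g = g (0, xv 0) 0"
    unfolding flow_value_d_eq using k1 k2' r0 by (subst sum_single_int) auto
  define z where "z = g (xv l, yv l)"
  have sum0: "g (0, xv 0) 0 = (\<Sum>m<(2::nat)^l. z (2 * of_nat m))"
    using flow_main(2)[OF cons cap, of 0] unfolding z_def by simp
  have zle: "\<And>m. z (2 * of_nat m) \<le> 1" using flow_main(4)[OF cons cap] unfolding z_def by blast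
  have zs: "(\<Sum>m<(2::nat)^l. z (2 * of_nat m)) \<ge> real (card {..<(2::nat)^l})"
    using vle v1 v2 sum0 by simp
  have z1: "\<And>m. m \<in> {..<(2::nat)^l} \<Longrightarrow> z (2 * of_nat m) = 1"
    by (rule sum_le_card_eq[where z = "\<lambda>m. z (2 * of_nat m)", OF _ zle zs]) auto
  have z0: "\<And>m. z (2 * of_nat m + 1) = 0"
  proof -
    fix m
    have "\<not> Pset l (0 + 2 * of_nat (Suc m) - (1::int))" by (rule Pset_gap) auto
    then have "\<not> Pset l (2 * of_nat m + (1::int))" by (simp add: add.commute)
    then show "z (2 * of_nat m + 1) = 0" using flow_main(1)[OF cons cap] unfolding z_def by blast
  qed
  have sub: "(\<lambda>m. 2 * int m) ` {..<2^l} \<subseteq> changes_d (f (xv l, yv l))"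
  proof
    fix x assume "x \<in> (\<lambda>m. 2 * int m) ` {..<2^l}"
    then obtain m where m: "m < 2^l" "x = 2 * int m" by auto
    have "2*m + 1 < 2^Suc l" using m(1) by simp
    then have "int (2*m + 1) < int (2^Suc l)" by (simp only: of_nat_less_iff)
    then have "2 * int m + 1 < 2^Suc l" by simp
    then have inr: "2 * int m \<in> {j1..j2}" "2 * int m + 1 \<in> {j1..j2}" unfolding j1_def j2_def by auto
    have ag: "\<And>\<theta>. \<theta> \<in> {j1..j2} \<Longrightarrow> g (xv l, yv l) \<theta> = f (xv l, yv l) \<theta>"
      using agree En_mem(2)[of l] by blast
    have "f (xv l, yv l) (x + 1) = 0" using ag[OF inr(2)] z0[of m] m(2) unfolding z_def by simp
    moreover have "f (xv l, yv l) x = 1" using ag[OF inr(1)] z1[of m] m unfolding z_def by simp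
    ultimately
    show "x \<in> changes_d (f (xv l, yv l))" unfolding changes_d_def by simp
  qed
  have "2^l \<le> nchanges_d (f (xv l, yv l))"
    using nchanges_d_ge[OF _ _ sub] enat_pow2[of l] by (simp add: inj_on_def)
  also have "\<dots> \<le> flow_complexity_d (En l) f"
    unfolding flow_complexity_d_def by (rule member_le_sum) (use En_mem(2) finite_En in auto)
  finally show ?thesis .
qed


lemma cut_cap_d_eq:
  "cut_capacity_d (En l) (tau l) (ucap l) a b S = (\<Sum>e\<in>En l. \<Sum>\<theta>\<in>{a..b - tau l e}. cfun l S e \<theta>)"
  unfolding cut_capacity_d_def cfun_def by simp

lemma Pset_int: "Pset l (\<theta>::int) \<Longrightarrow> \<theta> \<in> (\<lambda>m. 2 * int m) ` {..<2^l}"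
  unfolding Pset_def by auto

lemma Sstar_cap_d: "cut_capacity_d (En l) (tau l) (ucap l) a b (Sstar l) \<le> 2^l"
proof -
  have "cut_capacity_d (En l) (tau l) (ucap l) a b (Sstar l)
      = (\<Sum>e\<in>En l. \<Sum>\<theta>\<in>{a..b - tau l e}. if e = (xv l, yv l) \<and> Pset l \<theta> then 1 else 0)"
    unfolding cut_cap_d_eq by (rule sum.cong) (auto simp: cfun_Sstar)
  also have "\<dots> = (\<Sum>\<theta>\<in>{a..b}. if Pset l \<theta> then 1 else 0)"
    by (simp add: sum_En tau_simps)
  also have "\<dots> = (\<Sum>\<theta>\<in>{\<theta>\<in>{a..b}. Pset l \<theta>}. 1)"
    by (rule sum.inter_filter[symmetric]) simp
  also have "\<dots> = real (card {\<theta>\<in>{a..b}. Pset l \<theta>})" by simp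
  also have "\<dots> \<le> real (card ((\<lambda>m. 2 * int m) ` {..<2^l}))"
    using Pset_int by (intro of_nat_mono card_mono) auto
  also have "\<dots> \<le> real (card {..<(2::nat)^l})"
    by (intro of_nat_mono card_image_le) auto
  also have "\<dots> = 2^l" by simp
  finally show ?thesis .
qed

lemma offs_bound: "m < 2^i \<Longrightarrow> i < l \<Longrightarrow> 2 * int m + 2^Suc i \<le> 2^Suc l"
proof -
  assume m: "m < 2^i" and i: "i < l"
  have "m + 1 \<le> 2^i" using m by simp
  then have "int (m + 1) \<le> int (2^i)" by (simp only: of_nat_le_iff)
  then have "int m + 1 \<le> 2^i" by simp
  moreover have "(2::int)^Suc i = 2 * 2^i" "(2::int)^Suc (Suc i) = 4 * 2^i" by simp_all
  ultimately have "2 * int m + 2^Suc i \<le> 2^Suc (Suc i)" by linarith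
  also have "(2::int)^Suc (Suc i) \<le> 2^Suc l" by (rule power_increasing) (use i in auto)
  finally show ?thesis .
qed

lemma cap_d_lower:
  assumes k1: "k1 \<le> -2" and k2: "2^Suc l + 2 \<le> k2"
  shows "Jf l S 0 \<le> cut_capacity_d (En l) (tau l) (ucap l) k1 k2 S"
proof -
  have p0: "(0::int) \<le> 2^Suc l" by simp
  define F where "F e = (\<Sum>\<theta>\<in>{k1..k2 - tau l e}. cfun l S e \<theta>)" for e
  have cap: "cut_capacity_d (En l) (tau l) (ucap l) k1 k2 S = F (0, xv 0) + F (xv l, yv l)
      + (\<Sum>i<l. F (xv i, xv (Suc i)) + F (xv i, yv i) + F (yv i, xv (Suc i)))"
    unfolding cut_cap_d_eq F_def by (rule sum_En)
  have nn: "\<And>e \<theta>. 0 \<le> cfun l S e \<theta>" by (rule cfun_nonneg)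
  have b1: "cfun l S (0, xv 0) 0 \<le> F (0, xv 0)"
    unfolding F_def using sum_reindex_le[of "{0::nat}" "\<lambda>_. 0" k1 "k2 - tau l (0, xv 0)" "cfun l S (0, xv 0)"]
      nn k1 k2 p0 by (simp add: tau_simps)
  have b2: "(\<Sum>n<2*(2^l+1). cfun l S (xv l, yv l) (0 + of_nat n - 1)) \<le> F (xv l, yv l)"
    unfolding F_def
  proof (rule sum_reindex_le)
    show "inj_on (\<lambda>n. 0 + int n - 1) {..<2*(2^l+1)}" by (auto simp: inj_on_def)
    show "(\<lambda>n. 0 + int n - 1) ` {..<2*(2^l+1)} \<subseteq> {k1..k2 - tau l (xv l, yv l)}"
    proof
      fix x assume "x \<in> (\<lambda>n. 0 + int n - 1) ` {..<2*(2^l+1)}"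
      then obtain n where n: "n < 2*(2^l+1)" "x = int n - 1" by auto
      have "int n < 2 * (2^l + 1)" proof -
        have "int n < int (2*(2^l+1))" using n(1) by (simp only: of_nat_less_iff)
        then show ?thesis by simp
      qed
      then show "x \<in> {k1..k2 - tau l (xv l, yv l)}" using n(2) k1 k2 by (simp add: tau_simps)
    qed
  qed (auto simp: nn)
  have b3: "(\<Sum>m<(2::nat)^i. cfun l S (xv i, xv (Suc i)) (0 + 2 * of_nat m))
             + (\<Sum>m<(2::nat)^i. cfun l S (xv i, yv i) (0 + 2 * of_nat m))
             + (\<Sum>m<(2::nat)^i. cfun l S (yv i, xv (Suc i)) (0 + 2 * of_nat m + 2^Suc i))
        \<le> F (xv i, xv (Suc i)) + F (xv i, yv i) + F (yv i, xv (Suc i))" if il: "i < l" for i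
  proof -
    have ob: "0 \<le> 2 * int m \<and> 2 * int m \<le> k2 \<and> 2 * int m + 2^Suc i \<le> k2 \<and> 0 \<le> 2 * int m + 2^Suc i" if "m < 2^i" for m
    proof -
      have a: "2 * int m + 2^Suc i \<le> 2^Suc l" by (rule offs_bound[OF that il])
      have b: "(0::int) \<le> 2^Suc i" by simp
      have c: "(0::int) \<le> int m" by simp
      show ?thesis using a b c k2 by linarith
    qed
    have pw: "(0::int) \<le> 2^Suc i" by simp
    have c1: "(\<Sum>m<(2::nat)^i. cfun l S (xv i, xv (Suc i)) (0 + 2 * of_nat m)) \<le> F (xv i, xv (Suc i))"
      unfolding F_def
    proof (rule sum_reindex_le)
      show "(\<lambda>m. 0 + 2 * int m) ` {..<2^i} \<subseteq> {k1..k2 - tau l (xv i, xv (Suc i))}"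
      proof
        fix x assume "x \<in> (\<lambda>m. 0 + 2 * int m) ` {..<2^i}"
        then obtain m where m: "m < 2^i" "x = 2 * int m" by auto
        have t: "tau l (xv i, xv (Suc i)) = (0::int)" by (rule tau_simps)
        show "x \<in> {k1..k2 - tau l (xv i, xv (Suc i))}" using ob[OF m(1)] m(2) k1
          unfolding t atLeastAtMost_iff by linarith
      qed
    qed (auto simp: nn inj_on_def)
    have c2: "(\<Sum>m<(2::nat)^i. cfun l S (xv i, yv i) (0 + 2 * of_nat m)) \<le> F (xv i, yv i)"
      unfolding F_def
    proof (rule sum_reindex_le)
      show "(\<lambda>m. 0 + 2 * int m) ` {..<2^i} \<subseteq> {k1..k2 - tau l (xv i, yv i)}"
      proof
        fix x assume "x \<in> (\<lambda>m. 0 + 2 * int m) ` {..<2^i}"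
        then obtain m where m: "m < 2^i" "x = 2 * int m" by auto
        show "x \<in> {k1..k2 - tau l (xv i, yv i)}" using ob[OF m(1)] m(2) k1 pw il by (simp add: tau_xy)
      qed
    qed (auto simp: nn inj_on_def)
    have c3: "(\<Sum>m<(2::nat)^i. cfun l S (yv i, xv (Suc i)) (0 + 2 * of_nat m + 2^Suc i)) \<le> F (yv i, xv (Suc i))"
      unfolding F_def
    proof (rule sum_reindex_le)
      show "(\<lambda>m. 0 + 2 * int m + 2^Suc i) ` {..<2^i} \<subseteq> {k1..k2 - tau l (yv i, xv (Suc i))}"
      proof
        fix x assume "x \<in> (\<lambda>m. 0 + 2 * int m + 2^Suc i) ` {..<2^i}"
        then obtain m where m: "m < 2^i" "x = 2 * int m + 2^Suc i" by auto
        have t: "tau l (yv i, xv (Suc i)) = (0::int)" by (rule tau_simps)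
        show "x \<in> {k1..k2 - tau l (yv i, xv (Suc i))}" using ob[OF m(1)] m(2) k1
          unfolding t atLeastAtMost_iff by linarith
      qed
    qed (auto simp: nn inj_on_def)
    show ?thesis using c1 c2 c3 by linarith
  qed
  have "Jf l S 0 \<le> F (0, xv 0) + F (xv l, yv l) + (\<Sum>i<l. F (xv i, xv (Suc i)) + F (xv i, yv i) + F (yv i, xv (Suc i)))"
  proof -
    have b3s: "(\<Sum>i<l. (\<Sum>m<(2::nat)^i. cfun l S (xv i, xv (Suc i)) (0 + 2 * of_nat m))
             + (\<Sum>m<(2::nat)^i. cfun l S (xv i, yv i) (0 + 2 * of_nat m))
             + (\<Sum>m<(2::nat)^i. cfun l S (yv i, xv (Suc i)) (0 + 2 * of_nat m + 2^Suc i)))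
        \<le> (\<Sum>i<l. F (xv i, xv (Suc i)) + F (xv i, yv i) + F (yv i, xv (Suc i)))"
      by (rule sum_mono) (rule b3, simp)
    show ?thesis unfolding Jf_def using b1 b2 b3s by linarith
  qed
  then show ?thesis using cap by simp
qed

lemma mincut_d:
  assumes mc: "is_min_cut_inf_d (Vn l) (En l) 0 (yv l) (tau l) (ucap l) S"
  shows "2^l \<le> cut_complexity_d (Vn l) S"
proof -
  obtain a b where ab: "a \<le> b" and H: "\<forall>j1 j2. j1 \<le> a \<and> b \<le> j2 \<longrightarrow>
           (\<exists>k1 k2 S'. k1 \<le> j1 \<and> j2 \<le> k2 \<and> is_min_cut_d (En l) 0 (yv l) (tau l) (ucap l) k1 k2 S' \<and>
              (\<forall>v\<in>Vn l. \<forall>\<theta>\<in>{j1..j2}. S' v \<theta> = S v \<theta>))"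
    using mc unfolding is_min_cut_inf_d_def by blast
  define j1 :: int where "j1 = min a (-2)"
  define j2 :: int where "j2 = max b (2^Suc l + 2)"
  obtain k1 k2 S' where k: "k1 \<le> j1" "j2 \<le> k2" and S': "is_min_cut_d (En l) 0 (yv l) (tau l) (ucap l) k1 k2 S'"
    and agree: "\<forall>v\<in>Vn l. \<forall>\<theta>\<in>{j1..j2}. S' v \<theta> = S v \<theta>"
  proof -
    have "j1 \<le> a \<and> b \<le> j2" by (simp add: j1_def j2_def)
    then show ?thesis using H that by blast
  qed
  have k1: "k1 \<le> -2" using k(1) unfolding j1_def by linarith
  have k2: "2^Suc l + 2 \<le> k2" using k(2) unfolding j2_def by (rule order_trans[OF max.cobounded2])
  have "(0::int) \<le> 2^Suc l" by simp
  then have k2': "0 \<le> k2" using k2 by linarith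
  have cutS': "is_cut_d 0 (yv l) k1 k2 S'" using S' unfolding is_min_cut_d_def by (rule conjunct1)
  have cutSs: "is_cut_d 0 (yv l) k1 k2 (Sstar l)" unfolding is_cut_d_def by (simp add: Sstar_simps)
  have le1: "cut_capacity_d (En l) (tau l) (ucap l) k1 k2 S' \<le> cut_capacity_d (En l) (tau l) (ucap l) k1 k2 (Sstar l)"
  proof -
    have "\<forall>S''. is_cut_d 0 (yv l) k1 k2 S'' \<longrightarrow> cut_capacity_d (En l) (tau l) (ucap l) k1 k2 S' \<le> cut_capacity_d (En l) (tau l) (ucap l) k1 k2 S''"
      using S' unfolding is_min_cut_d_def by (rule conjunct2)
    then show ?thesis using cutSs by blast
  qed
  have s0: "S' 0 0" using cutS' k1 k2' unfolding is_cut_d_def by auto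
  have tn: "\<not> S' (yv l) (0 + of_nat n - 1)" if "n < 2*(2^l+1)" for n
  proof -
    have "int n < 2 * (2^l + 1)" proof -
      have "int n < int (2*(2^l+1))" using that by (simp only: of_nat_less_iff)
      then show ?thesis by simp
    qed
    then have "0 + int n - 1 \<in> {k1..k2}" using k1 k2 by simp
    then show ?thesis using cutS' unfolding is_cut_d_def by blast
  qed
  define bad where "bad = (if \<exists>m<(2::nat)^l. \<not> S' (xv l) (0 + 2 * of_nat m) then 1 else (0::real))"
  define gaps where "gaps = (\<Sum>m<(2::nat)^l+1. if S' (xv l) (0 + 2 * of_nat m - 1) then 1 else (0::real))"
  have "2^l + bad + gaps \<le> Jf l S' 0" unfolding bad_def gaps_def by (rule J_lower) (use s0 tn in auto)
  also have "\<dots> \<le> 2^l" using cap_d_lower[OF k1 k2, of S'] le1 Sstar_cap_d[of l k1 k2] by linarith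
  finally have bg: "bad + gaps \<le> 0" by simp
  have "bad \<ge> 0" unfolding bad_def by simp
  moreover have "gaps \<ge> 0" unfolding gaps_def by (rule sum_nonneg) simp
  ultimately have "bad = 0" "gaps = 0" using bg by linarith+
  then have b0: "bad = 0" and g0: "gaps = 0" .
  have A: "S' (xv l) (2 * int m)" if "m < 2^l" for m
  proof (rule ccontr)
    assume "\<not> S' (xv l) (2 * int m)"
    then have "\<exists>m<(2::nat)^l. \<not> S' (xv l) (0 + 2 * of_nat m)" using that by auto
    then show False using b0 unfolding bad_def by simp
  qed
  have B: "\<not> S' (xv l) (2 * int m - 1)" if "m < 2^l + 1" for m
  proof
    assume a: "S' (xv l) (2 * int m - 1)"
    have fin: "finite {..<(2::nat)^l+1}" by simp
    have iff: "(\<Sum>m<(2::nat)^l+1. if S' (xv l) (0 + 2 * of_nat m - 1) then 1 else (0::real)) = 0 \<longleftrightarrow>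
       (\<forall>m\<in>{..<(2::nat)^l+1}. (if S' (xv l) (0 + 2 * of_nat m - 1) then 1 else (0::real)) = 0)"
      by (rule sum_nonneg_eq_0_iff[OF fin]) simp
    have "\<forall>m\<in>{..<(2::nat)^l+1}. (if S' (xv l) (0 + 2 * of_nat m - 1) then 1 else (0::real)) = 0"
      using iff g0 unfolding gaps_def by blast
    then have "(if S' (xv l) (0 + 2 * of_nat m - 1) then 1 else (0::real)) = 0" using that by blast
    then show False using a by simp
  qed
  have sub: "(\<lambda>m. 2 * int m) ` {..<2^l} \<subseteq> changes_d (S (xv l))"
  proof
    fix x assume "x \<in> (\<lambda>m. 2 * int m) ` {..<2^l}"
    then obtain m where m: "m < 2^l" "x = 2 * int m" by auto
    have "2*m + 1 < 2^Suc l" using m(1) by simp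
    then have "int (2*m + 1) < int (2^Suc l)" by (simp only: of_nat_less_iff)
    then have "2 * int m + 1 < 2^Suc l" by simp
    then have inr: "2 * int m \<in> {j1..j2}" "2 * int m + 1 \<in> {j1..j2}" unfolding j1_def j2_def by auto
    have xl: "xv l \<in> Vn l" unfolding Vn_def xv_def yv_def by simp
    have ag: "\<And>\<theta>. \<theta> \<in> {j1..j2} \<Longrightarrow> S' (xv l) \<theta> = S (xv l) \<theta>"
      using agree xl by blast
    have "\<not> S' (xv l) (2 * int (Suc m) - 1)" using B[of "Suc m"] m(1) by simp
    then have "\<not> S (xv l) (x + 1)" using ag[OF inr(2)] m(2) by (simp add: algebra_simps)
    moreover have "S (xv l) x" using ag[OF inr(1)] A[OF m(1)] m(2) by simp
    ultimately show "x \<in> changes_d (S (xv l))" unfolding changes_d_def by auto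
  qed
  have "2^l \<le> nchanges_d (S (xv l))"
    using nchanges_d_ge[OF _ _ sub] enat_pow2[of l] by (simp add: inj_on_def)
  also have "\<dots> \<le> cut_complexity_d (Vn l) S"
    unfolding cut_complexity_d_def
    by (rule member_le_sum) (auto simp: Vn_def xv_def yv_def)
  finally show ?thesis .
qed


lemma finite_Vn: "finite (Vn l)" unfolding Vn_def by simp
lemma card_Vn: "card (Vn l) = 2*l+3" unfolding Vn_def yv_def by simp
lemma Vn_mem: "0 \<in> Vn l" "yv l \<in> Vn l" "xv l \<in> Vn l" unfolding Vn_def xv_def yv_def by auto

lemma card_Wn: "card (Wn l) \<le> 3*l"
proof -
  have "card (Wn l) \<le> (\<Sum>i<l. card {(xv i, xv (Suc i)), (xv i, yv i), (yv i, xv (Suc i))})"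
    unfolding Wn_def by (rule card_UN_le) simp
  also have "\<dots> \<le> (\<Sum>i<l. 3)"
    by (rule sum_mono) (auto intro!: order_trans[OF card_insert_le] simp: card_insert_if)
  finally show ?thesis by simp
qed

lemma card_En: "card (En l) \<le> 3*l+2"
proof -
  have ci: "finite A \<Longrightarrow> card (insert x A) \<le> Suc (card A)" for x and A :: "(nat \<times> nat) set"
    by (simp add: card_insert_if)
  have "card (En l) \<le> Suc (card (insert (xv l, yv l) (Wn l)))" unfolding En_def by (rule ci) (simp add: finite_Wn)
  also have "\<dots> \<le> Suc (Suc (card (Wn l)))" using ci[OF finite_Wn] by simp
  finally show ?thesis using card_Wn[of l] by simp
qed

lemma En_trancl: "(a, b) \<in> (En l)\<^sup>+ \<Longrightarrow> a < b"
proof (induction rule: trancl_induct)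
  case (base y) then show ?case using En_lt by fastforce
next
  case (step y z) then show ?case using En_lt by fastforce
qed

lemma acyclic_En: "acyclic_graph (En l)"
  unfolding acyclic_graph_def using En_trancl by blast

lemma changes_d_ucap: "changes_d (ucap l e :: int \<Rightarrow> real) = (if e = (0, xv 0) then {-1, 0} else {})"
proof (cases "e = (0, xv 0)")
  case True
  have M: "(2::real)^Suc l \<noteq> 0" by simp
  show ?thesis using True M unfolding changes_d_def ucap_def by auto
next
  case False
  then show ?thesis unfolding changes_d_def ucap_def by auto
qed

lemma nchanges_d_ucap: "nchanges_d (ucap l e :: int \<Rightarrow> real) = (if e = (0, xv 0) then 2 else 0)"
  unfolding nchanges_d_def changes_d_ucap by (simp add: zero_enat_def numeral_eq_enat)

lemma num_cap_d: "num_cap_changes_d (En l) (ucap l) = 2"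
  unfolding num_cap_changes_d_def sum_En nchanges_d_ucap by simp

lemma size_d:
  assumes "l \<ge> 1"
  shows "dyn_size_le_d (Vn l) (En l) (tau l) (ucap l) (5 * l ^ 1)"
  unfolding dyn_size_le_d_def
proof (intro conjI ballI allI)
  show "card (Vn l) \<le> 5 * l^1" using assms card_Vn[of l] by simp
  show "card (En l) \<le> 5 * l^1" using assms card_En[of l] by simp
  have p: "(2::int)^l \<le> 2^(5*l^1)" by (rule power_increasing) auto
  fix e assume e: "e \<in> En l"
  have t1: "tau l e \<le> (2::int)^l" by (rule tau_le[OF e])
  have t2: "(0::int) \<le> tau l e" by (rule tau_nonneg)
  have "tau l e \<le> (2::int)^(5*l^1)" using t1 p by (rule order_trans)
  then show "\<bar>tau l e\<bar> \<le> (2::int)^(5*l^1)" using t2 by simp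
  fix \<theta> :: int
  have pr: "(2::real)^Suc l \<le> 2^(5*l^1)" by (rule power_increasing) (use assms in auto)
  show "ucap l e \<theta> \<in> \<int>" unfolding ucap_def by auto
  show "\<bar>ucap l e \<theta>\<bar> \<le> 2^(5*l^1)" using pr unfolding ucap_def
    by (auto simp: order_trans[OF one_le_numeral])
next
  fix e \<theta> assume "e \<in> En l" "\<theta> \<in> changes_d (ucap l e :: int \<Rightarrow> real)"
  then have "\<theta> \<in> {-1, 0}" by (simp add: changes_d_ucap split: if_splits)
  moreover have "(1::int) \<le> 2^(5*l^1)" by simp
  ultimately show "\<bar>\<theta>\<bar> \<le> 2^(5*l^1)" by auto
qed

lemma net_d: "dyn_network_d (Vn l) (En l) 0 (yv l) (tau l) (ucap l)"
  unfolding dyn_network_d_def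
  using finite_Vn En_sub Vn_mem tau_nonneg
  by (auto simp: changes_d_ucap ucap_def)

lemma disc_part:
  "\<exists>c k :: nat. \<forall>l::nat. l \<ge> 1 \<longrightarrow>
     (\<exists>V E s t \<tau> u.
        dyn_network_d V E s t \<tau> u \<and> acyclic_graph E \<and>
        dyn_size_le_d V E \<tau> u (c * l ^ k) \<and>
        num_cap_changes_d E u = 2 \<and>
        (\<forall>S. is_min_cut_inf_d V E s t \<tau> u S \<longrightarrow> cut_complexity_d V S \<ge> 2 ^ l) \<and>
        (\<forall>f. is_max_flow_inf_d V E s t \<tau> u f \<longrightarrow> flow_complexity_d E f \<ge> 2 ^ l))"
proof -
  have "\<forall>l::nat. l \<ge> 1 \<longrightarrow> (\<exists>V E s t \<tau> u.
        dyn_network_d V E s t \<tau> u \<and> acyclic_graph E \<and>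
        dyn_size_le_d V E \<tau> u (5 * l ^ 1) \<and>
        num_cap_changes_d E u = 2 \<and>
        (\<forall>S. is_min_cut_inf_d V E s t \<tau> u S \<longrightarrow> cut_complexity_d V S \<ge> 2 ^ l) \<and>
        (\<forall>f. is_max_flow_inf_d V E s t \<tau> u f \<longrightarrow> flow_complexity_d E f \<ge> 2 ^ l))"
  proof (intro allI impI)
    fix l :: nat assume l: "1 \<le> l"
    show "\<exists>V E s t \<tau> u.
        dyn_network_d V E s t \<tau> u \<and> acyclic_graph E \<and>
        dyn_size_le_d V E \<tau> u (5 * l ^ 1) \<and>
        num_cap_changes_d E u = 2 \<and>
        (\<forall>S. is_min_cut_inf_d V E s t \<tau> u S \<longrightarrow> cut_complexity_d V S \<ge> 2 ^ l) \<and>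
        (\<forall>f. is_max_flow_inf_d V E s t \<tau> u f \<longrightarrow> flow_complexity_d E f \<ge> 2 ^ l)"
      using net_d acyclic_En size_d[OF l] num_cap_d mincut_d maxflow_d by blast
  qed
  then show ?thesis by blast
qed


lemma Pset_set: "{\<theta>::real. Pset i \<theta>} = (\<Union>m\<in>{..<(2::nat)^i}. {2 * real m..<2 * real m + 1})"
  unfolding Pset_def by auto

lemma Pset_borel[measurable]: "Measurable.pred borel (Pset i :: real \<Rightarrow> bool)"
  unfolding pred_def by (simp add: Pset_set del: UN_simps)

lemma test1: "(\<lambda>\<theta>::real. if Pset i (\<theta> - c) then (k::real) else 0) \<in> borel_measurable borel"
  by measurable

lemma test2: "{\<theta>::real. S \<theta>} \<in> sets borel \<Longrightarrow> (\<lambda>\<theta>::real. if S \<theta> \<and> \<not> S (\<theta> + c) then (k::real) else 0) \<in> borel_measurable borel"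
proof -
  assume a: "{\<theta>::real. S \<theta>} \<in> sets borel"
  then have [measurable]: "Measurable.pred borel S" unfolding pred_def by simp
  show ?thesis by measurable
qed

lemma AE_exists_interval:
  fixes c d :: real
  assumes "AE x in lborel. P x" "c < d"
  shows "\<exists>x. c < x \<and> x < d \<and> P x"
proof (rule ccontr)
  assume n: "\<not> (\<exists>x. c < x \<and> x < d \<and> P x)"
  from assms(1) obtain N where N: "{x \<in> space lborel. \<not> P x} \<subseteq> N" "emeasure lborel N = 0" "N \<in> sets lborel"
    by (rule AE_E)
  have "{c<..<d} \<subseteq> N" using N(1) n by auto
  then have "emeasure lborel {c<..<d} \<le> emeasure lborel N" by (rule emeasure_mono) (use N(3) in simp)
  then show False using N(2) assms(2) emeasure_lborel_Ioo[of c d] by simp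
qed

lemma integrable_ind_bounded:
  fixes h :: "real \<Rightarrow> real"
  assumes h: "h \<in> borel_measurable borel" and B: "\<And>x. \<bar>h x\<bar> \<le> B"
    and A: "A \<in> sets borel" "emeasure lborel A < \<infinity>"
  shows "integrable lborel (\<lambda>x. indicator A x * h x)"
proof (rule Bochner_Integration.integrable_bound[where f = "\<lambda>x. B * indicator A x"])
  show "integrable lborel (\<lambda>x. B * indicator A x)"
    using A by (intro integrable_mult_right integrable_indicator) auto
  show "(\<lambda>x. indicator A x * h x) \<in> borel_measurable lborel" using h A by simp
  show "AE x in lborel. norm (indicator A x * h x) \<le> norm (B * indicator A x)"
    using B by (auto simp: indicator_def abs_mult intro!: AE_I2) (smt (verit) B)
qed

lemma shift_integral:
  fixes h :: "real \<Rightarrow> real"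
  shows "(LINT \<theta>|lborel. indicator {0..<1} \<theta> * h (\<theta> + c)) = (LINT \<theta>|lborel. indicator {c..<c+1} \<theta> * h \<theta>)"
proof -
  have "(LINT \<theta>|lborel. indicator {c..<c+1} \<theta> * h \<theta>) = \<bar>1\<bar> *\<^sub>R (LINT x|lborel. indicator {c..<c+1} (c + 1 * x) * h (c + 1 * x))"
    by (rule lborel_integral_real_affine) simp
  also have "\<dots> = (LINT \<theta>|lborel. indicator {0..<1} \<theta> * h (\<theta> + c))"
  proof -
    have eq: "\<And>x. indicator {c..<c+1} (c + 1 * x) * h (c + 1 * x) = indicator {0..<1} x * h (x + c)"
      by (auto simp: indicator_def add.commute)
    show ?thesis by (simp only: eq) simp
  qed
  finally show ?thesis by simp
qed


lemma ind_sum_le: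
  fixes ofs :: "nat \<Rightarrow> real"
  assumes fin: "finite I" and sep: "\<And>m m'. m \<in> I \<Longrightarrow> m' \<in> I \<Longrightarrow> m \<noteq> m' \<Longrightarrow> 1 \<le> \<bar>ofs m - ofs m'\<bar>"
    and rng: "\<And>m. m \<in> I \<Longrightarrow> a \<le> ofs m \<and> ofs m + 1 \<le> b"
  shows "(\<Sum>m\<in>I. indicator {ofs m..<ofs m + 1} \<theta>) \<le> (indicator {a..b} \<theta> :: real)"
proof -
  define K where "K = {m\<in>I. \<theta> \<in> {ofs m..<ofs m + 1}}"
  have "(\<Sum>m\<in>I. indicator {ofs m..<ofs m + 1} \<theta>) = (\<Sum>m\<in>I. if \<theta> \<in> {ofs m..<ofs m + 1} then 1 else (0::real))"
    by (auto simp: indicator_def intro!: sum.cong)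
  also have "\<dots> = (\<Sum>m\<in>K. 1)" unfolding K_def by (rule sum.inter_filter[symmetric, OF fin])
  also have "\<dots> = real (card K)" by simp
  finally have eq: "(\<Sum>m\<in>I. indicator {ofs m..<ofs m + 1} \<theta>) = real (card K)" .
  have finK: "finite K" unfolding K_def using fin by simp
  have one: "card K \<le> 1"
  proof -
    have "\<forall>m1\<in>K. \<forall>m2\<in>K. m1 = m2"
    proof (intro ballI)
      fix m1 m2 assume "m1 \<in> K" "m2 \<in> K"
      then have "m1 \<in> I" "m2 \<in> I" "\<bar>ofs m1 - ofs m2\<bar> < 1" unfolding K_def by auto
      then show "m1 = m2" using sep by force
    qed
    then show ?thesis using card_le_Suc0_iff_eq[OF finK] by simp
  qed
  show ?thesis
  proof (cases "K = {}")
    case True then show ?thesis using eq by simp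
  next
    case False
    then obtain m where "m \<in> K" by auto
    then have "\<theta> \<in> {a..b}" using rng unfolding K_def by force
    then show ?thesis using eq one by simp
  qed
qed

lemma GL:
  fixes h :: "real \<Rightarrow> real" and ofs :: "nat \<Rightarrow> real"
  assumes h: "h \<in> borel_measurable borel" and nn: "\<And>x. 0 \<le> h x" and B: "\<And>x. h x \<le> B"
    and fin: "finite I" and sep: "\<And>m m'. m \<in> I \<Longrightarrow> m' \<in> I \<Longrightarrow> m \<noteq> m' \<Longrightarrow> 1 \<le> \<bar>ofs m - ofs m'\<bar>"
    and rng: "\<And>m. m \<in> I \<Longrightarrow> a \<le> ofs m \<and> ofs m + 1 \<le> b"
  shows "(\<Sum>m\<in>I. LINT \<theta>|lborel. indicator {0..<1} \<theta> * h (\<theta> + ofs m)) \<le> (LINT \<theta>:{a..b}|lborel. h \<theta>)"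
proof -
  have hB: "\<And>x. \<bar>h x\<bar> \<le> B" using nn B by (metis abs_of_nonneg)
  have int: "\<And>A. A \<in> sets borel \<Longrightarrow> emeasure lborel A < \<infinity> \<Longrightarrow> integrable lborel (\<lambda>x. indicator A x * h x)"
    by (rule integrable_ind_bounded[OF h hB])
  have intI: "\<And>m. integrable lborel (\<lambda>x. indicator {ofs m..<ofs m + 1} x * h x)"
    by (rule int) auto
  have "(\<Sum>m\<in>I. LINT \<theta>|lborel. indicator {0..<1} \<theta> * h (\<theta> + ofs m))
      = (\<Sum>m\<in>I. LINT \<theta>|lborel. indicator {ofs m..<ofs m + 1} \<theta> * h \<theta>)"
    by (simp add: shift_integral)
  also have "\<dots> = (LINT \<theta>|lborel. (\<Sum>m\<in>I. indicator {ofs m..<ofs m + 1} \<theta> * h \<theta>))"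
    by (rule Bochner_Integration.integral_sum[where M=lborel and I=I and f="\<lambda>m \<theta>. indicator {ofs m..<ofs m + 1} \<theta> * h \<theta>", symmetric]) (rule intI)
  also have "\<dots> \<le> (LINT \<theta>|lborel. indicator {a..b} \<theta> * h \<theta>)"
  proof (rule integral_mono)
    show "integrable lborel (\<lambda>\<theta>. \<Sum>m\<in>I. indicator {ofs m..<ofs m + 1} \<theta> * h \<theta>)"
      by (rule Bochner_Integration.integrable_sum) (rule intI)
    show "integrable lborel (\<lambda>\<theta>. indicator {a..b} \<theta> * h \<theta>)" by (rule int) (auto simp: emeasure_lborel_Icc_eq)
    fix \<theta>
    have "(\<Sum>m\<in>I. indicator {ofs m..<ofs m + 1} \<theta> * h \<theta>) = (\<Sum>m\<in>I. indicator {ofs m..<ofs m + 1} \<theta>) * h \<theta>"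
      by (simp add: sum_distrib_right)
    also have "\<dots> \<le> indicator {a..b} \<theta> * h \<theta>"
      by (rule mult_right_mono[OF ind_sum_le[OF fin sep rng] nn])
    finally show "(\<Sum>m\<in>I. indicator {ofs m..<ofs m + 1} \<theta> * h \<theta>) \<le> indicator {a..b} \<theta> * h \<theta>" .
  qed
  also have "\<dots> = (LINT \<theta>:{a..b}|lborel. h \<theta>)" by (simp add: set_lebesgue_integral_def)
  finally show ?thesis .
qed

lemma nat_sep: "m \<noteq> m' \<Longrightarrow> 1 \<le> \<bar>real m - real m'\<bar>"
  by (cases "m < m'") (auto simp: abs_if)


lemma nchanges_ge:
  assumes "inj_on p K" "finite K" "p ` K \<subseteq> changes g"
  shows "enat (card K) \<le> nchanges g"
proof (cases "finite (changes g)")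
  case True
  then have "card (p ` K) \<le> card (changes g)" using assms(3) by (rule card_mono)
  then show ?thesis using True assms(1) by (simp add: nchanges_def card_image)
next
  case False then show ?thesis by (simp add: nchanges_def)
qed

lemma ucap_meas[measurable]: "(ucap l e :: real \<Rightarrow> real) \<in> borel_measurable borel"
  unfolding ucap_def by measurable

lemma gstar_meas[measurable]: "(gstar l e :: real \<Rightarrow> real) \<in> borel_measurable borel"
  unfolding gstar_def by measurable

lemma flow_value_eq:
  "flow_value (En l) 0 (tau l) h = (LINT \<theta>|lborel. h (0, xv 0) \<theta>)"
  unfolding flow_value_def by (simp add: out_s in_s)

lemma gstar_value: "flow_value (En l) 0 (tau l) (gstar l) = 2^l"
proof -
  have "(\<lambda>\<theta>::real. gstar l (0, xv 0) \<theta>) = (\<lambda>\<theta>. 2^l * indicator {0..<1} \<theta>)"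
    by (auto simp: gstar_simps indicator_def)
  then show ?thesis unfolding flow_value_eq by simp
qed

lemma maxflow_c:
  assumes mf: "is_max_flow_inf (Vn l) (En l) 0 (yv l) (tau l) (ucap l) f"
  shows "2^l \<le> flow_complexity (En l) f"
proof -
  obtain a b where ab: "a \<le> b" and H: "\<forall>j1 j2. j1 \<le> a \<and> b \<le> j2 \<longrightarrow>
           (\<exists>k1 k2 g. k1 \<le> j1 \<and> j2 \<le> k2 \<and> is_max_flow (Vn l) (En l) 0 (yv l) (tau l) (ucap l) k1 k2 g \<and>
              (\<forall>e\<in>En l. \<forall>\<theta>\<in>{j1..j2}. g e \<theta> = f e \<theta>))"
    using mf unfolding is_max_flow_inf_def by blast
  define j1 :: real where "j1 = min a (-1)"
  define j2 :: real where "j2 = max b (2^Suc l + 1)"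
  obtain k1 k2 g where k: "k1 \<le> j1" "j2 \<le> k2" and g: "is_max_flow (Vn l) (En l) 0 (yv l) (tau l) (ucap l) k1 k2 g"
    and agree: "\<forall>e\<in>En l. \<forall>\<theta>\<in>{j1..j2}. g e \<theta> = f e \<theta>"
  proof -
    have "j1 \<le> a \<and> b \<le> j2" by (simp add: j1_def j2_def)
    then show ?thesis using H that by blast
  qed
  have gf: "is_flow (Vn l) (En l) 0 (yv l) (tau l) (ucap l) k1 k2 g" using g unfolding is_max_flow_def by (rule conjunct1)
  have meas: "\<forall>e\<in>En l. g e \<in> borel_measurable borel" using gf unfolding is_flow_def by (rule conjunct1)
  have cap: "\<forall>e\<in>En l. \<forall>\<theta>. 0 \<le> g e \<theta> \<and> g e \<theta> \<le> ucap l e \<theta>"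
    using gf unfolding is_flow_def by (elim conjE)
  have cons: "ConsF l g" using gf unfolding is_flow_def ConsF_def by (elim conjE)
  have k1: "k1 \<le> -1" using k(1) unfolding j1_def by linarith
  have k2: "2^Suc l + 1 \<le> k2" using k(2) unfolding j2_def by (rule order_trans[OF max.cobounded2])
  have gs: "is_flow (Vn l) (En l) 0 (yv l) (tau l) (ucap l) k1 k2 (gstar l)"
    unfolding is_flow_def
  proof (intro conjI)
    show "\<forall>e\<in>En l. (gstar l e :: real \<Rightarrow> real) \<in> borel_measurable borel" using gstar_meas by blast
    show "\<forall>e\<in>En l. \<forall>\<theta>::real. 0 \<le> gstar l e \<theta> \<and> gstar l e \<theta> \<le> ucap l e \<theta>" using gstar_cap by blast
    show "\<forall>e\<in>En l. \<forall>\<theta>. \<not> (k1 \<le> \<theta> \<and> \<theta> + tau l e \<le> k2) \<longrightarrow> gstar l e \<theta> = 0"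
    proof (intro ballI allI impI)
      fix e \<theta> assume e: "e \<in> En l" and nw: "\<not> (k1 \<le> \<theta> \<and> \<theta> + tau l e \<le> k2)"
      show "gstar l e \<theta> = 0"
      proof (rule ccontr)
        assume "gstar l e \<theta> \<noteq> 0"
        then have "0 \<le> \<theta> \<and> \<theta> + tau l e \<le> 2^Suc l" by (rule gstar_window[OF e])
        then show False using nw k1 k2 by linarith
      qed
    qed
    show "\<forall>v\<in>Vn l - {0, yv l}. \<forall>\<theta>::real. (\<Sum>e\<in>{e \<in> En l. snd e = v}. gstar l e (\<theta> - tau l e)) = (\<Sum>e\<in>{e \<in> En l. fst e = v}. gstar l e \<theta>)"
      using gstar_cons[of l] unfolding ConsF_def by blast
  qed
  have vle: "2^l \<le> flow_value (En l) 0 (tau l) g"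
    using g gs gstar_value[of l] unfolding is_max_flow_def by metis
  define z where "z = g (xv l, yv l)"
  define Z where "Z \<theta> = (\<Sum>m<(2::nat)^l. z (\<theta> + 2 * real m))" for \<theta>
  have zm[measurable]: "z \<in> borel_measurable borel" using meas En_mem(2)[of l] unfolding z_def by blast
  have Zm[measurable]: "Z \<in> borel_measurable borel" unfolding Z_def by measurable
  have z01: "\<And>\<theta>. 0 \<le> z \<theta> \<and> z \<theta> \<le> 1" using flow_main(4)[OF cons cap] unfolding z_def by blast
  have Z0: "0 \<le> Z \<theta>" for \<theta> unfolding Z_def using z01 by (simp add: sum_nonneg)
  have Z1: "Z \<theta> \<le> 2^l" for \<theta>
  proof -
    have "Z \<theta> \<le> (\<Sum>m<(2::nat)^l. 1)" unfolding Z_def by (rule sum_mono) (use z01 in blast)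
    then show ?thesis by simp
  qed
  have v2: "flow_value (En l) 0 (tau l) g = (LINT \<theta>|lborel. indicator {0..<1} \<theta> * Z \<theta>)"
    unfolding flow_value_eq
  proof (rule Bochner_Integration.integral_cong[OF refl])
    fix \<theta> :: real
    show "g (0, xv 0) \<theta> = indicator {0..<1} \<theta> * Z \<theta>"
    proof (cases "0 \<le> \<theta> \<and> \<theta> < 1")
      case True
      then show ?thesis using flow_main(2)[OF cons cap, of \<theta>] unfolding Z_def z_def by (simp add: indicator_def)
    next
      case False
      then show ?thesis using flow_main(3)[OF cons cap, of \<theta>] by (simp add: indicator_def)
    qed
  qed
  have iZ: "integrable lborel (\<lambda>\<theta>. indicator {0..<1} \<theta> * Z \<theta>)"
    by (rule integrable_ind_bounded[where B = "2^l"]) (use Z0 Z1 in auto)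
  have iC: "integrable lborel (\<lambda>\<theta>::real. indicator {0..<1} \<theta> * (2::real)^l)"
    by (intro integrable_mult_left integrable_indicator) auto
  have iD: "integrable lborel (\<lambda>\<theta>. indicator {0..<1} \<theta> * (2^l - Z \<theta>))"
    using Bochner_Integration.integrable_diff[OF iC iZ] by (simp add: right_diff_distrib)
  have m1: "measure lborel {0..<(1::real)} = 1"
  proof -
    have "measure lborel {0..<(1::real)} = 1 - 0" by (rule measure_lborel_Ico) simp
    then show ?thesis by (simp only: diff_zero)
  qed
  have cval: "(LINT \<theta>::real|lborel. indicator {0..<1} \<theta> * (2::real)^l) = 2^l" using m1 by simp
  have "(LINT \<theta>|lborel. indicator {0..<1} \<theta> * (2^l - Z \<theta>))
       = (LINT \<theta>::real|lborel. indicator {0..<1} \<theta> * (2::real)^l) - (LINT \<theta>|lborel. indicator {0..<1} \<theta> * Z \<theta>)"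
    using Bochner_Integration.integral_diff[OF iC iZ] by (simp add: right_diff_distrib)
  also have "\<dots> \<le> 0" using cval vle v2 by simp
  finally have i0: "(LINT \<theta>|lborel. indicator {0..<1} \<theta> * (2^l - Z \<theta>)) \<le> 0" .
  have nnD: "\<And>\<theta>. 0 \<le> indicator {0..<1} \<theta> * (2^l - Z \<theta>)" using Z1 by (simp add: indicator_def)
  have "(LINT \<theta>|lborel. indicator {0..<1} \<theta> * (2^l - Z \<theta>)) = 0"
  proof -
    have "0 \<le> (LINT \<theta>|lborel. indicator {0..<1} \<theta> * (2^l - Z \<theta>))"
      by (rule Bochner_Integration.integral_nonneg_AE) (rule AE_I2, rule nnD)
    then show ?thesis using i0 by linarith
  qed
  then have AE0: "AE \<theta> in lborel. indicator {0..<1} \<theta> * (2^l - Z \<theta>) = 0"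
    using integral_nonneg_eq_0_iff_AE[OF iD] nnD by simp
  have AE1: "AE \<theta> in lborel. 0 \<le> \<theta> \<and> \<theta> < 1 \<longrightarrow> (\<forall>m<(2::nat)^l. z (\<theta> + 2 * real m) = 1)"
    using AE0
  proof (rule AE_mp, intro AE_I2 impI allI)
    fix \<theta> :: real and m assume e: "indicator {0..<1} \<theta> * (2^l - Z \<theta>) = 0" and th: "0 \<le> \<theta> \<and> \<theta> < 1" and m: "m < (2::nat)^l"
    have "Z \<theta> = 2^l" using e th by (simp add: indicator_def)
    then have zs: "(\<Sum>m<(2::nat)^l. z (\<theta> + 2 * real m)) \<ge> real (card {..<(2::nat)^l})" unfolding Z_def by simp
    show "z (\<theta> + 2 * real m) = 1"
      by (rule sum_le_card_eq[where z = "\<lambda>m. z (\<theta> + 2 * real m)", OF _ _ zs]) (use z01 m in auto)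
  qed
  have gap: "z (\<theta>0 + 2 * real m - 1) = 0" if "0 \<le> \<theta>0" "\<theta>0 < 1" for \<theta>0 m
    using flow_main(1)[OF cons cap] Pset_gap[OF that, of l m] unfolding z_def by blast
  have ag: "\<And>\<theta>. \<theta> \<in> {j1..j2} \<Longrightarrow> z \<theta> = f (xv l, yv l) \<theta>"
    using agree En_mem(2)[of l] unfolding z_def by blast
  have sub: "(\<lambda>m. 2 * real m) ` {..<2^l} \<subseteq> changes (f (xv l, yv l))"
  proof
    fix p assume "p \<in> (\<lambda>m. 2 * real m) ` {..<2^l}"
    then obtain m where m: "m < 2^l" "p = 2 * real m" by auto
    have "2*m + 1 < 2^Suc l" using m(1) by simp
    then have "real (2*m + 1) < real (2^Suc l)" by (simp only: of_nat_less_iff)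
    then have pm: "2 * real m + 1 < 2^Suc l" by simp
    show "p \<in> changes (f (xv l, yv l))"
      unfolding changes_def
    proof (clarify)
      fix \<delta> :: real assume d: "0 < \<delta>" and lc: "\<forall>x. \<bar>x - p\<bar> < \<delta> \<longrightarrow> f (xv l, yv l) x = f (xv l, yv l) p"
      define \<delta>' where "\<delta>' = min \<delta> 1"
      have d': "0 < \<delta>'" "\<delta>' \<le> 1" "\<delta>' \<le> \<delta>" using d unfolding \<delta>'_def by auto
      obtain \<theta>0 where t0: "0 < \<theta>0" "\<theta>0 < \<delta>'" "0 \<le> \<theta>0 \<and> \<theta>0 < 1 \<longrightarrow> (\<forall>m<(2::nat)^l. z (\<theta>0 + 2 * real m) = 1)"
        using AE_exists_interval[OF AE1 d'(1)] by auto
      have z1: "z (\<theta>0 + 2 * real m) = 1" using t0 d' m(1) by auto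
      define \<theta>1 where "\<theta>1 = 1 - \<delta>' / 2"
      have t1: "0 \<le> \<theta>1" "\<theta>1 < 1" using d' unfolding \<theta>1_def by auto
      have z0: "z (\<theta>1 + 2 * real m - 1) = 0" by (rule gap[OF t1])
      have r1: "\<theta>0 + 2 * real m \<in> {j1..j2}" using t0 d' pm unfolding j1_def j2_def by auto
      have r2: "\<theta>1 + 2 * real m - 1 \<in> {j1..j2}" using t1 pm unfolding j1_def j2_def by auto
      have a1: "\<bar>(\<theta>0 + 2 * real m) - p\<bar> < \<delta>" using t0 d' m(2) by simp
      have a2: "\<bar>(\<theta>1 + 2 * real m - 1) - p\<bar> < \<delta>" using d' m(2) unfolding \<theta>1_def by simp
      have "f (xv l, yv l) (\<theta>0 + 2 * real m) = f (xv l, yv l) p"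
        using lc a1 by blast
      moreover have "f (xv l, yv l) (\<theta>1 + 2 * real m - 1) = f (xv l, yv l) p"
        using lc a2 by blast
      ultimately show False using z1 z0 ag[OF r1] ag[OF r2] by simp
    qed
  qed
  have "2^l \<le> nchanges (f (xv l, yv l))"
    using nchanges_ge[OF _ _ sub] enat_pow2[of l] by (simp add: inj_on_def)
  also have "\<dots> \<le> flow_complexity (En l) f"
    unfolding flow_complexity_def by (rule member_le_sum) (use En_mem(2) finite_En in auto)
  finally show ?thesis .
qed


lemma cut_cap_eq:
  "cut_capacity (En l) (tau l) (ucap l) a b S = (\<Sum>e\<in>En l. LINT \<theta>:{a..b - tau l e}|lborel. cfun l S e \<theta>)"
  unfolding cut_capacity_def cfun_def by simp

lemma cfun_meas:
  assumes "{\<theta>::real. S (fst e) \<theta>} \<in> sets borel" "{\<theta>::real. S (snd e) \<theta>} \<in> sets borel"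
  shows "cfun l S e \<in> borel_measurable borel"
proof -
  have [measurable]: "Measurable.pred borel (S (fst e))" "Measurable.pred borel (S (snd e))"
    using assms unfolding pred_def by simp_all
  show ?thesis unfolding cfun_def by measurable
qed

lemma Sstar_pred[measurable]: "Measurable.pred borel (Sstar l v :: real \<Rightarrow> bool)"
  unfolding Sstar_def by measurable

lemma Sstar_sets: "{\<theta>::real. Sstar l v \<theta>} \<in> sets borel"
  using Sstar_pred unfolding pred_def by simp

lemma intg01:
  fixes h :: "real \<Rightarrow> real"
  assumes h: "h \<in> borel_measurable borel" and b: "\<And>x. 0 \<le> h x \<and> h x \<le> B"
  shows "integrable lborel (\<lambda>\<theta>. indicator {0..<1} \<theta> * h (\<theta> + c))"
proof (rule integrable_ind_bounded[where B = B])
  show "(\<lambda>\<theta>. h (\<theta> + c)) \<in> borel_measurable borel" using h by measurable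
  show "\<And>x. \<bar>h (x + c)\<bar> \<le> B" using b by (metis abs_of_nonneg)
qed auto

lemma meas_unit: "measure lborel {a..<a+(1::real)} = 1"
proof -
  have "measure lborel {a..<a+(1::real)} = (a + 1) - a" by (rule measure_lborel_Ico) simp
  then show ?thesis by simp
qed

lemma Sstar_cap_c:
  assumes "k1 \<le> k2"
  shows "cut_capacity (En l) (tau l) (ucap l) k1 k2 (Sstar l) \<le> 2^l"
proof -
  have "cut_capacity (En l) (tau l) (ucap l) k1 k2 (Sstar l)
      = (\<Sum>e\<in>En l. LINT \<theta>:{k1..k2 - tau l e}|lborel. (if e = (xv l, yv l) \<and> Pset l \<theta> then 1 else 0))"
  proof -
    have cf: "\<And>e. e \<in> En l \<Longrightarrow> cfun l (Sstar l) e = (\<lambda>\<theta>::real. if e = (xv l, yv l) \<and> Pset l \<theta> then 1 else 0)"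
      by (rule ext) (rule cfun_Sstar)
    show ?thesis unfolding cut_cap_eq by (rule sum.cong[OF refl]) (simp only: cf)
  qed
  also have "\<dots> = (LINT \<theta>:{k1..k2}|lborel. (if Pset l \<theta> then 1 else 0))"
    by (simp add: sum_En tau_simps)
  also have "\<dots> = (LINT \<theta>|lborel. indicator {k1..k2} \<theta> * (if Pset l \<theta> then 1 else 0))"
    by (simp add: set_lebesgue_integral_def)
  also have "\<dots> \<le> (LINT \<theta>|lborel. (\<Sum>m<(2::nat)^l. indicator {2 * real m..<2 * real m + 1} \<theta>))"
  proof (rule integral_mono)
    show "integrable lborel (\<lambda>\<theta>. indicator {k1..k2} \<theta> * (if Pset l \<theta> then 1 else (0::real)))"
      by (rule integrable_ind_bounded[where B = 1]) (auto simp: emeasure_lborel_Icc_eq)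
    show "integrable lborel (\<lambda>\<theta>. \<Sum>m<(2::nat)^l. indicator {2 * real m..<2 * real m + 1} \<theta> :: real)"
      by (rule Bochner_Integration.integrable_sum) auto
    fix \<theta> :: real
    show "indicator {k1..k2} \<theta> * (if Pset l \<theta> then 1 else 0) \<le> (\<Sum>m<(2::nat)^l. indicator {2 * real m..<2 * real m + 1} \<theta> :: real)"
    proof (cases "Pset l \<theta>")
      case True
      then obtain m where m: "m < 2^l" "2 * real m \<le> \<theta>" "\<theta> < 2 * real m + 1" unfolding Pset_def by auto
      have "(1::real) \<le> indicator {2 * real m..<2 * real m + 1} \<theta>" using m by simp
      also have "\<dots> \<le> (\<Sum>m<(2::nat)^l. indicator {2 * real m..<2 * real m + 1} \<theta>)"
        by (rule member_le_sum) (use m in auto)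
      finally show ?thesis by (simp add: indicator_def)
    next
      case False then show ?thesis by (simp add: sum_nonneg)
    qed
  qed
  also have "\<dots> = (\<Sum>m<(2::nat)^l. LINT \<theta>|lborel. indicator {2 * real m..<2 * real m + 1} \<theta>)"
    by (rule Bochner_Integration.integral_sum) auto
  also have "\<dots> = (\<Sum>m<(2::nat)^l. (1::real))"
    using meas_unit by (intro sum.cong refl) simp
  finally show ?thesis by simp
qed


lemma sep2: "m \<noteq> m' \<Longrightarrow> 1 \<le> \<bar>(2 * real m + c) - (2 * real m' + c)\<bar>"
  using nat_sep[of m m'] by (cases "m < m'") (auto simp: abs_if)

lemma sep1: "m \<noteq> m' \<Longrightarrow> 1 \<le> \<bar>(real m - 1) - (real m' - 1)\<bar>"
  using nat_sep[of m m'] by simp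

lemma offs_bound_r: "m < 2^i \<Longrightarrow> i < l \<Longrightarrow> 2 * real m + 2^Suc i + 1 \<le> 2^Suc l"
proof -
  assume m: "m < 2^i" and i: "i < l"
  have "m + 1 \<le> 2^i" using m by simp
  then have "real (m + 1) \<le> real (2^i)" by (simp only: of_nat_le_iff)
  then have "real m + 1 \<le> 2^i" by simp
  moreover have "(2::real)^Suc i = 2 * 2^i" "(2::real)^Suc (Suc i) = 4 * 2^i" by simp_all
  moreover have "(1::real) \<le> 2^i" by simp
  ultimately have "2 * real m + 2^Suc i + 1 \<le> 2^Suc (Suc i)" by linarith
  also have "(2::real)^Suc (Suc i) \<le> 2^Suc l" by (rule power_increasing) (use i in auto)
  finally show ?thesis .
qed

lemma cap_c_lower:
  assumes k1: "k1 \<le> -2" and k2: "2^Suc l + 2 \<le> k2"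
    and Sm: "\<And>v. v \<in> Vn l \<Longrightarrow> {\<theta>::real. S v \<theta>} \<in> sets borel"
  shows "integrable lborel (\<lambda>\<theta>. indicator {0..<1} \<theta> * Jf l S \<theta>)"
    and "(LINT \<theta>|lborel. indicator {0..<1} \<theta> * Jf l S \<theta>) \<le> cut_capacity (En l) (tau l) (ucap l) k1 k2 S"
proof -
  have cm: "cfun l S e \<in> borel_measurable borel" if "e \<in> En l" for e
  proof -
    have "fst e \<in> Vn l" "snd e \<in> Vn l" using that En_sub[of l] by (auto simp: mem_Times_iff)
    then show ?thesis using Sm by (intro cfun_meas) auto
  qed
  have cb: "\<And>e x. 0 \<le> cfun l S e x \<and> cfun l S e x \<le> 2^Suc l" using cfun_nonneg cfun_le by blast
  have ig: "integrable lborel (\<lambda>\<theta>. indicator {0..<1} \<theta> * cfun l S e (\<theta> + c))" if "e \<in> En l" for e c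
    by (rule intg01[OF cm[OF that] cb])
  define F where "F e = (LINT \<theta>:{k1..k2 - tau l e}|lborel. cfun l S e \<theta>)" for e
  have cap: "cut_capacity (En l) (tau l) (ucap l) k1 k2 S = F (0, xv 0) + F (xv l, yv l)
      + (\<Sum>i<l. F (xv i, xv (Suc i)) + F (xv i, yv i) + F (yv i, xv (Suc i)))"
    unfolding cut_cap_eq F_def by (rule sum_En)
  define ind :: "real \<Rightarrow> real" where "ind \<theta> = indicator {0..<1} \<theta>" for \<theta>
  define P01 where "P01 \<theta> = ind \<theta> * cfun l S (0, xv 0) (\<theta> + 0)" for \<theta>
  define Pl where "Pl n \<theta> = ind \<theta> * cfun l S (xv l, yv l) (\<theta> + (real n - 1))" for n \<theta>
  define Pxx where "Pxx i m \<theta> = ind \<theta> * cfun l S (xv i, xv (Suc i)) (\<theta> + (2 * real m + 0))" for i m \<theta>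
  define Pxy where "Pxy i m \<theta> = ind \<theta> * cfun l S (xv i, yv i) (\<theta> + (2 * real m + 0))" for i m \<theta>
  define Pyx where "Pyx i m \<theta> = ind \<theta> * cfun l S (yv i, xv (Suc i)) (\<theta> + (2 * real m + 2^Suc i))" for i m \<theta>
  define Q where "Q i \<theta> = (\<Sum>m<(2::nat)^i. Pxx i m \<theta>) + (\<Sum>m<(2::nat)^i. Pxy i m \<theta>) + (\<Sum>m<(2::nat)^i. Pyx i m \<theta>)" for i \<theta>
  have i01: "integrable lborel P01" unfolding P01_def ind_def by (rule ig) (rule En_mem)
  have il: "integrable lborel (Pl n)" for n unfolding Pl_def ind_def by (rule ig) (rule En_mem)
  have ixx: "integrable lborel (Pxx i m)" if "i < l" for i m unfolding Pxx_def ind_def by (rule ig) (rule En_mem, rule that)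
  have ixy: "integrable lborel (Pxy i m)" if "i < l" for i m unfolding Pxy_def ind_def by (rule ig) (rule En_mem, rule that)
  have iyx: "integrable lborel (Pyx i m)" if "i < l" for i m unfolding Pyx_def ind_def by (rule ig) (rule En_mem, rule that)
  have isxx: "integrable lborel (\<lambda>\<theta>. \<Sum>m<(2::nat)^i. Pxx i m \<theta>)" if "i < l" for i
    by (rule Bochner_Integration.integrable_sum) (rule ixx[OF that])
  have isxy: "integrable lborel (\<lambda>\<theta>. \<Sum>m<(2::nat)^i. Pxy i m \<theta>)" if "i < l" for i
    by (rule Bochner_Integration.integrable_sum) (rule ixy[OF that])
  have isyx: "integrable lborel (\<lambda>\<theta>. \<Sum>m<(2::nat)^i. Pyx i m \<theta>)" if "i < l" for i
    by (rule Bochner_Integration.integrable_sum) (rule iyx[OF that])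
  have iQ: "integrable lborel (Q i)" if "i < l" for i
    unfolding Q_def using isxx[OF that] isxy[OF that] isyx[OF that] by (intro Bochner_Integration.integrable_add)
  have iQs: "integrable lborel (\<lambda>\<theta>. \<Sum>i<l. Q i \<theta>)"
    by (rule Bochner_Integration.integrable_sum) (rule iQ, simp)
  have iPls: "integrable lborel (\<lambda>\<theta>. \<Sum>n<2*(2^l+1). Pl n \<theta>)"
    by (rule Bochner_Integration.integrable_sum) (rule il)
  have pw: "indicator {0..<1} \<theta> * Jf l S \<theta> = P01 \<theta> + (\<Sum>n<2*(2^l+1). Pl n \<theta>) + (\<Sum>i<l. Q i \<theta>)" for \<theta>
    unfolding Jf_def P01_def Pl_def Q_def Pxx_def Pxy_def Pyx_def ind_def
    by (simp add: distrib_left sum_distrib_left add.assoc add_diff_eq)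
  have fun_eq: "(\<lambda>\<theta>. indicator {0..<1} \<theta> * Jf l S \<theta>) = (\<lambda>\<theta>. P01 \<theta> + (\<Sum>n<2*(2^l+1). Pl n \<theta>) + (\<Sum>i<l. Q i \<theta>))"
    using pw by (rule ext)
  show "integrable lborel (\<lambda>\<theta>. indicator {0..<1} \<theta> * Jf l S \<theta>)"
    unfolding fun_eq using i01 iPls iQs by (intro Bochner_Integration.integrable_add)
  have intval: "(LINT \<theta>|lborel. indicator {0..<1} \<theta> * Jf l S \<theta>)
     = integral\<^sup>L lborel P01 + (\<Sum>n<2*(2^l+1). integral\<^sup>L lborel (Pl n)) + (\<Sum>i<l. integral\<^sup>L lborel (Q i))"
  proof -
    have "(LINT \<theta>|lborel. indicator {0..<1} \<theta> * Jf l S \<theta>) = (LINT \<theta>|lborel. P01 \<theta> + (\<Sum>n<2*(2^l+1). Pl n \<theta>) + (\<Sum>i<l. Q i \<theta>))"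
      unfolding fun_eq ..
    also have "\<dots> = (LINT \<theta>|lborel. P01 \<theta> + (\<Sum>n<2*(2^l+1). Pl n \<theta>)) + (LINT \<theta>|lborel. (\<Sum>i<l. Q i \<theta>))"
      by (rule Bochner_Integration.integral_add) (use i01 iPls iQs in auto)
    also have "(LINT \<theta>|lborel. P01 \<theta> + (\<Sum>n<2*(2^l+1). Pl n \<theta>)) = integral\<^sup>L lborel P01 + (LINT \<theta>|lborel. (\<Sum>n<2*(2^l+1). Pl n \<theta>))"
      by (rule Bochner_Integration.integral_add) (use i01 iPls in auto)
    also have "(LINT \<theta>|lborel. (\<Sum>n<2*(2^l+1). Pl n \<theta>)) = (\<Sum>n<2*(2^l+1). integral\<^sup>L lborel (Pl n))"
      by (rule Bochner_Integration.integral_sum) (rule il)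
    also have "(LINT \<theta>|lborel. (\<Sum>i<l. Q i \<theta>)) = (\<Sum>i<l. integral\<^sup>L lborel (Q i))"
      by (rule Bochner_Integration.integral_sum) (rule iQ, simp)
    finally show ?thesis .
  qed
  have gl: "\<And>e (I::nat set) (ofs::nat \<Rightarrow> real). e \<in> En l \<Longrightarrow> finite I \<Longrightarrow> (\<And>m m'. m \<in> I \<Longrightarrow> m' \<in> I \<Longrightarrow> m \<noteq> m' \<Longrightarrow> 1 \<le> \<bar>ofs m - ofs m'\<bar>)
     \<Longrightarrow> (\<And>m. m \<in> I \<Longrightarrow> k1 \<le> ofs m \<and> ofs m + 1 \<le> k2 - tau l e)
     \<Longrightarrow> (\<Sum>m\<in>I. LINT \<theta>|lborel. indicator {0..<1} \<theta> * cfun l S e (\<theta> + ofs m)) \<le> F e"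
    unfolding F_def by (rule GL[where B = "2^Suc l"]) (use cm cb in auto)
  have p0: "(0::real) \<le> 2^Suc l" by simp
  have b01: "integral\<^sup>L lborel P01 \<le> F (0, xv 0)"
    using gl[of "(0, xv 0)" "{0::nat}" "\<lambda>_. 0"] k1 k2 p0 unfolding P01_def ind_def by (simp add: En_mem tau_simps)
  have bl: "(\<Sum>n<2*(2^l+1). integral\<^sup>L lborel (Pl n)) \<le> F (xv l, yv l)"
    unfolding Pl_def ind_def
  proof (rule gl[OF En_mem(2)])
    fix m :: nat assume "m \<in> {..<2*(2^l+1)}"
    then have "m < 2*(2^l+1)" by simp
    then have "real m < real (2*(2^l+1))" by (simp only: of_nat_less_iff)
    then have "real m < 2 * 2^l + 2" by simp
    then show "k1 \<le> real m - 1 \<and> real m - 1 + 1 \<le> k2 - tau l (xv l, yv l)" using k1 k2 by (simp add: tau_simps)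
  qed (auto intro: sep1)
  have bQ: "integral\<^sup>L lborel (Q i) \<le> F (xv i, xv (Suc i)) + F (xv i, yv i) + F (yv i, xv (Suc i))" if il: "i < l" for i
  proof -
    have ob: "k1 \<le> 2 * real m + 0 \<and> 2 * real m + 0 + 1 \<le> k2 \<and> 2 * real m + 0 + 1 \<le> k2 - 2^Suc i
        \<and> k1 \<le> 2 * real m + 2^Suc i \<and> 2 * real m + 2^Suc i + 1 \<le> k2" if "m < 2^i" for m
    proof -
      have a: "2 * real m + 2^Suc i + 1 \<le> 2^Suc l" by (rule offs_bound_r[OF that il])
      have b: "(0::real) \<le> 2^Suc i" by simp
      have c: "(0::real) \<le> real m" by simp
      show ?thesis using a b c k1 k2 by linarith
    qed
    have c1: "(\<Sum>m<(2::nat)^i. integral\<^sup>L lborel (Pxx i m)) \<le> F (xv i, xv (Suc i))"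
      unfolding Pxx_def ind_def
      by (rule gl[OF En_mem(3)[OF il]]) (use ob in \<open>auto simp: tau_simps intro: sep2\<close>)
    have c2: "(\<Sum>m<(2::nat)^i. integral\<^sup>L lborel (Pxy i m)) \<le> F (xv i, yv i)"
      unfolding Pxy_def ind_def
      by (rule gl[OF En_mem(4)[OF il]]) (use ob il in \<open>auto simp: tau_xy intro: sep2\<close>)
    have c3: "(\<Sum>m<(2::nat)^i. integral\<^sup>L lborel (Pyx i m)) \<le> F (yv i, xv (Suc i))"
      unfolding Pyx_def ind_def
      by (rule gl[OF En_mem(5)[OF il]]) (use ob in \<open>auto simp: tau_simps intro: sep2\<close>)
    have "integral\<^sup>L lborel (Q i) = (\<Sum>m<(2::nat)^i. integral\<^sup>L lborel (Pxx i m)) + (\<Sum>m<(2::nat)^i. integral\<^sup>L lborel (Pxy i m))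
        + (\<Sum>m<(2::nat)^i. integral\<^sup>L lborel (Pyx i m))"
    proof -
      have "integral\<^sup>L lborel (Q i) = (LINT \<theta>|lborel. (\<Sum>m<(2::nat)^i. Pxx i m \<theta>) + (\<Sum>m<(2::nat)^i. Pxy i m \<theta>))
          + (LINT \<theta>|lborel. (\<Sum>m<(2::nat)^i. Pyx i m \<theta>))"
        unfolding Q_def by (rule Bochner_Integration.integral_add) (use isxx[OF il] isxy[OF il] isyx[OF il] in auto)
      also have "(LINT \<theta>|lborel. (\<Sum>m<(2::nat)^i. Pxx i m \<theta>) + (\<Sum>m<(2::nat)^i. Pxy i m \<theta>))
          = (LINT \<theta>|lborel. (\<Sum>m<(2::nat)^i. Pxx i m \<theta>)) + (LINT \<theta>|lborel. (\<Sum>m<(2::nat)^i. Pxy i m \<theta>))"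
        by (rule Bochner_Integration.integral_add) (use isxx[OF il] isxy[OF il] in auto)
      also have "(LINT \<theta>|lborel. (\<Sum>m<(2::nat)^i. Pxx i m \<theta>)) = (\<Sum>m<(2::nat)^i. integral\<^sup>L lborel (Pxx i m))"
        by (rule Bochner_Integration.integral_sum) (rule ixx[OF il])
      also have "(LINT \<theta>|lborel. (\<Sum>m<(2::nat)^i. Pxy i m \<theta>)) = (\<Sum>m<(2::nat)^i. integral\<^sup>L lborel (Pxy i m))"
        by (rule Bochner_Integration.integral_sum) (rule ixy[OF il])
      also have "(LINT \<theta>|lborel. (\<Sum>m<(2::nat)^i. Pyx i m \<theta>)) = (\<Sum>m<(2::nat)^i. integral\<^sup>L lborel (Pyx i m))"
        by (rule Bochner_Integration.integral_sum) (rule iyx[OF il])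
      finally show ?thesis .
    qed
    then show ?thesis using c1 c2 c3 by linarith
  qed
  have "(\<Sum>i<l. integral\<^sup>L lborel (Q i)) \<le> (\<Sum>i<l. F (xv i, xv (Suc i)) + F (xv i, yv i) + F (yv i, xv (Suc i)))"
    by (rule sum_mono) (rule bQ, simp)
  then show "(LINT \<theta>|lborel. indicator {0..<1} \<theta> * Jf l S \<theta>) \<le> cut_capacity (En l) (tau l) (ucap l) k1 k2 S"
    unfolding intval cap using b01 bl by linarith
qed


lemma mincut_c:
  assumes mc: "is_min_cut_inf (Vn l) (En l) 0 (yv l) (tau l) (ucap l) S"
  shows "2^l \<le> cut_complexity (Vn l) S"
proof -
  obtain a b where ab: "a \<le> b" and H: "\<forall>j1 j2. j1 \<le> a \<and> b \<le> j2 \<longrightarrow>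
           (\<exists>k1 k2 S'. k1 \<le> j1 \<and> j2 \<le> k2 \<and> is_min_cut (Vn l) (En l) 0 (yv l) (tau l) (ucap l) k1 k2 S' \<and>
              (\<forall>v\<in>Vn l. \<forall>\<theta>\<in>{j1..j2}. S' v \<theta> = S v \<theta>))"
    using mc unfolding is_min_cut_inf_def by blast
  define j1 :: real where "j1 = min a (-2)"
  define j2 :: real where "j2 = max b (2^Suc l + 2)"
  obtain k1 k2 S' where k: "k1 \<le> j1" "j2 \<le> k2" and S': "is_min_cut (Vn l) (En l) 0 (yv l) (tau l) (ucap l) k1 k2 S'"
    and agree: "\<forall>v\<in>Vn l. \<forall>\<theta>\<in>{j1..j2}. S' v \<theta> = S v \<theta>"
  proof -
    have "j1 \<le> a \<and> b \<le> j2" by (simp add: j1_def j2_def)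
    then show ?thesis using H that by blast
  qed
  have k1: "k1 \<le> -2" using k(1) unfolding j1_def by linarith
  have k2: "2^Suc l + 2 \<le> k2" using k(2) unfolding j2_def by (rule order_trans[OF max.cobounded2])
  have "(0::real) \<le> 2^Suc l" by simp
  then have k12: "k1 \<le> k2" and k2ge: "2 \<le> k2" using k1 k2 by linarith+
  have cutS': "is_cut (Vn l) 0 (yv l) k1 k2 S'" using S' unfolding is_min_cut_def by (rule conjunct1)
  have Sm: "\<And>v. v \<in> Vn l \<Longrightarrow> {\<theta>. S' v \<theta>} \<in> sets borel" using cutS' unfolding is_cut_def by blast
  have st: "\<And>\<theta>. \<theta> \<in> {k1..k2} \<Longrightarrow> S' 0 \<theta> \<and> \<not> S' (yv l) \<theta>" using cutS' unfolding is_cut_def by blast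
  have cutSs: "is_cut (Vn l) 0 (yv l) k1 k2 (Sstar l)" unfolding is_cut_def
    using Sstar_sets by (simp add: Sstar_simps)
  have le1: "cut_capacity (En l) (tau l) (ucap l) k1 k2 S' \<le> cut_capacity (En l) (tau l) (ucap l) k1 k2 (Sstar l)"
  proof -
    have "\<forall>S''. is_cut (Vn l) 0 (yv l) k1 k2 S'' \<longrightarrow> cut_capacity (En l) (tau l) (ucap l) k1 k2 S' \<le> cut_capacity (En l) (tau l) (ucap l) k1 k2 S''"
      using S' unfolding is_min_cut_def by (rule conjunct2)
    then show ?thesis using cutSs by blast
  qed
  note low = cap_c_lower[where S = S', OF k1 k2 Sm]
  define ind :: "real \<Rightarrow> real" where "ind \<theta> = indicator {0..<1} \<theta>" for \<theta>
  define bad where "bad \<theta> = (if \<exists>m<(2::nat)^l. \<not> S' (xv l) (\<theta> + 2 * real m) then 1 else (0::real))" for \<theta>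
  define gaps where "gaps \<theta> = (\<Sum>m<(2::nat)^l+1. if S' (xv l) (\<theta> + 2 * real m - 1) then 1 else (0::real))" for \<theta>
  have bg0: "0 \<le> bad \<theta>" "0 \<le> gaps \<theta>" for \<theta> unfolding bad_def gaps_def by (simp, rule sum_nonneg, simp)
  have Jl: "2^l + bad \<theta> + gaps \<theta> \<le> Jf l S' \<theta>" if th: "0 \<le> \<theta>" "\<theta> < 1" for \<theta>
    unfolding bad_def gaps_def
  proof (rule J_lower[OF th])
    have "\<theta> \<in> {k1..k2}" using th k1 k2ge by simp
    then show "S' 0 \<theta>" using st by blast
    fix n :: nat assume n: "n < 2*(2^l+1)"
    then have "real n < real (2*(2^l+1))" by (simp only: of_nat_less_iff)
    then have "real n < 2 * 2^l + 2" by simp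
    then have "\<theta> + real n - 1 \<in> {k1..k2}" using th k1 k2 by simp
    then show "\<not> S' (yv l) (\<theta> + of_nat n - 1)" using st by simp
  qed
  have iJ: "integrable lborel (\<lambda>\<theta>. ind \<theta> * Jf l S' \<theta>)" using low(1) unfolding ind_def .
  have iC: "integrable lborel (\<lambda>\<theta>::real. ind \<theta> * (2::real)^l)" unfolding ind_def
    by (intro integrable_mult_left integrable_indicator) auto
  have iD: "integrable lborel (\<lambda>\<theta>. ind \<theta> * (Jf l S' \<theta> - 2^l))"
    using Bochner_Integration.integrable_diff[OF iJ iC] by (simp add: right_diff_distrib)
  have m1: "measure lborel {0..<(1::real)} = 1"
  proof -
    have "measure lborel {0..<(1::real)} = 1 - 0" by (rule measure_lborel_Ico) simp
    then show ?thesis by (simp only: diff_zero)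
  qed
  have cval: "(LINT \<theta>::real|lborel. ind \<theta> * (2::real)^l) = 2^l" using m1 unfolding ind_def by simp
  have "(LINT \<theta>|lborel. ind \<theta> * (Jf l S' \<theta> - 2^l))
       = (LINT \<theta>|lborel. ind \<theta> * Jf l S' \<theta>) - (LINT \<theta>::real|lborel. ind \<theta> * (2::real)^l)"
    using Bochner_Integration.integral_diff[OF iJ iC] by (simp add: right_diff_distrib)
  also have "\<dots> \<le> 0" using cval low(2) le1 Sstar_cap_c[OF k12, of l] unfolding ind_def by linarith
  finally have i0: "(LINT \<theta>|lborel. ind \<theta> * (Jf l S' \<theta> - 2^l)) \<le> 0" .
  have nnD: "\<And>\<theta>. 0 \<le> ind \<theta> * (Jf l S' \<theta> - 2^l)"
  proof -
    fix \<theta> :: real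
    show "0 \<le> ind \<theta> * (Jf l S' \<theta> - 2^l)"
    proof (cases "0 \<le> \<theta> \<and> \<theta> < 1")
      case True
      have "2^l + bad \<theta> + gaps \<theta> \<le> Jf l S' \<theta>" using Jl True by blast
      then have "0 \<le> Jf l S' \<theta> - 2^l" using bg0[of \<theta>] by linarith
      then show ?thesis using True unfolding ind_def by (simp add: indicator_def)
    next
      case False
      then have "ind \<theta> = 0" unfolding ind_def by (auto simp: indicator_def)
      then show ?thesis by simp
    qed
  qed
  have "(LINT \<theta>|lborel. ind \<theta> * (Jf l S' \<theta> - 2^l)) = 0"
  proof -
    have "0 \<le> (LINT \<theta>|lborel. ind \<theta> * (Jf l S' \<theta> - 2^l))"
      by (rule Bochner_Integration.integral_nonneg_AE) (rule AE_I2, rule nnD)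
    then show ?thesis using i0 by linarith
  qed
  then have AE0: "AE \<theta> in lborel. ind \<theta> * (Jf l S' \<theta> - 2^l) = 0"
    using integral_nonneg_eq_0_iff_AE[OF iD] nnD by simp
  have AE1: "AE \<theta> in lborel. 0 \<le> \<theta> \<and> \<theta> < 1 \<longrightarrow>
      (\<forall>m<(2::nat)^l. S' (xv l) (\<theta> + 2 * real m)) \<and> (\<forall>m<(2::nat)^l+1. \<not> S' (xv l) (\<theta> + 2 * real m - 1))"
    using AE0
  proof (rule AE_mp, intro AE_I2 impI)
    fix \<theta> :: real assume e: "ind \<theta> * (Jf l S' \<theta> - 2^l) = 0" and th: "0 \<le> \<theta> \<and> \<theta> < 1"
    have "Jf l S' \<theta> = 2^l" using e th unfolding ind_def by (simp add: indicator_def)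
    moreover have "2^l + bad \<theta> + gaps \<theta> \<le> Jf l S' \<theta>" using Jl th by blast
    ultimately have b0: "bad \<theta> = 0" and g0: "gaps \<theta> = 0" using bg0[of \<theta>] by linarith+
    have A: "\<forall>m<(2::nat)^l. S' (xv l) (\<theta> + 2 * real m)"
      using b0 unfolding bad_def by (auto split: if_splits)
    have fin: "finite {..<(2::nat)^l+1}" by simp
    have iff: "gaps \<theta> = 0 \<longleftrightarrow>
       (\<forall>m\<in>{..<(2::nat)^l+1}. (if S' (xv l) (\<theta> + 2 * real m - 1) then 1 else (0::real)) = 0)"
      unfolding gaps_def by (rule sum_nonneg_eq_0_iff[OF fin]) simp
    have B: "\<forall>m<(2::nat)^l+1. \<not> S' (xv l) (\<theta> + 2 * real m - 1)"
    proof (intro allI impI)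
      fix m :: nat assume m: "m < 2^l + 1"
      then have "(if S' (xv l) (\<theta> + 2 * real m - 1) then 1 else (0::real)) = 0" using iff g0 by blast
      then show "\<not> S' (xv l) (\<theta> + 2 * real m - 1)" by (simp split: if_splits)
    qed
    show "(\<forall>m<(2::nat)^l. S' (xv l) (\<theta> + 2 * real m)) \<and> (\<forall>m<(2::nat)^l+1. \<not> S' (xv l) (\<theta> + 2 * real m - 1))"
      using A B by blast
  qed
  have xl: "xv l \<in> Vn l" by (rule Vn_mem)
  have ag: "\<And>\<theta>. \<theta> \<in> {j1..j2} \<Longrightarrow> S' (xv l) \<theta> = S (xv l) \<theta>" using agree xl by blast
  have sub: "(\<lambda>m. 2 * real m) ` {..<2^l} \<subseteq> changes (S (xv l))"
  proof
    fix p assume "p \<in> (\<lambda>m. 2 * real m) ` {..<2^l}"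
    then obtain m where m: "m < 2^l" "p = 2 * real m" by auto
    have "2*m + 1 < 2^Suc l" using m(1) by simp
    then have "real (2*m + 1) < real (2^Suc l)" by (simp only: of_nat_less_iff)
    then have pm: "2 * real m + 1 < 2^Suc l" by simp
    show "p \<in> changes (S (xv l))"
      unfolding changes_def
    proof (clarify)
      fix \<delta> :: real assume d: "0 < \<delta>" and lc: "\<forall>x. \<bar>x - p\<bar> < \<delta> \<longrightarrow> S (xv l) x = S (xv l) p"
      define \<delta>' where "\<delta>' = min \<delta> 1"
      have d': "0 < \<delta>'" "\<delta>' \<le> 1" "\<delta>' \<le> \<delta>" using d unfolding \<delta>'_def by auto
      obtain \<theta>0 where t0: "0 < \<theta>0" "\<theta>0 < \<delta>'" "0 \<le> \<theta>0 \<and> \<theta>0 < 1 \<longrightarrow>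
          (\<forall>m<(2::nat)^l. S' (xv l) (\<theta>0 + 2 * real m)) \<and> (\<forall>m<(2::nat)^l+1. \<not> S' (xv l) (\<theta>0 + 2 * real m - 1))"
        using AE_exists_interval[OF AE1 d'(1)] by auto
      have s1: "S' (xv l) (\<theta>0 + 2 * real m)" using t0 d' m(1) by auto
      have d1: "1 - \<delta>' < 1" using d' by simp
      obtain \<theta>1 where t1: "1 - \<delta>' < \<theta>1" "\<theta>1 < 1" "0 \<le> \<theta>1 \<and> \<theta>1 < 1 \<longrightarrow>
          (\<forall>m<(2::nat)^l. S' (xv l) (\<theta>1 + 2 * real m)) \<and> (\<forall>m<(2::nat)^l+1. \<not> S' (xv l) (\<theta>1 + 2 * real m - 1))"
        using AE_exists_interval[OF AE1 d1] by auto
      have t1': "0 \<le> \<theta>1" using t1(1) d' by linarith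
      have s0: "\<not> S' (xv l) (\<theta>1 + 2 * real m - 1)" using t1 t1' m(1) by auto
      have r1: "\<theta>0 + 2 * real m \<in> {j1..j2}" using t0 d' pm unfolding j1_def j2_def by auto
      have r2: "\<theta>1 + 2 * real m - 1 \<in> {j1..j2}" using t1 t1' pm unfolding j1_def j2_def by auto
      have a1: "\<bar>(\<theta>0 + 2 * real m) - p\<bar> < \<delta>" using t0 d' m(2) by simp
      have a2: "\<bar>(\<theta>1 + 2 * real m - 1) - p\<bar> < \<delta>" using t1 d' m(2) by simp
      have "S (xv l) (\<theta>0 + 2 * real m) = S (xv l) p" using lc a1 by blast
      moreover have "S (xv l) (\<theta>1 + 2 * real m - 1) = S (xv l) p" using lc a2 by blast
      ultimately show False using s1 s0 ag[OF r1] ag[OF r2] by simp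
    qed
  qed
  have "2^l \<le> nchanges (S (xv l))"
    using nchanges_ge[OF _ _ sub] enat_pow2[of l] by (simp add: inj_on_def)
  also have "\<dots> \<le> cut_complexity (Vn l) S"
    unfolding cut_complexity_def by (rule member_le_sum) (use xl finite_Vn in auto)
  finally show ?thesis .
qed


lemma changes_const: "changes (\<lambda>\<theta>::real. c) = {}"
  unfolding changes_def by (auto intro: exI[of _ 1])

lemma changes_pulse:
  fixes M :: real assumes M: "M \<noteq> 0"
  shows "changes (\<lambda>\<theta>::real. if 0 \<le> \<theta> \<and> \<theta> < 1 then M else 0) = {0, 1}"
proof (intro equalityI subsetI)
  fix x assume x: "x \<in> changes (\<lambda>\<theta>::real. if 0 \<le> \<theta> \<and> \<theta> < 1 then M else 0)"
  show "x \<in> {0, 1}"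
  proof (rule ccontr)
    assume nx: "x \<notin> {0, 1}"
    define d where "d = min \<bar>x\<bar> \<bar>x - 1\<bar>"
    have d: "0 < d" using nx unfolding d_def by auto
    have "\<forall>y. \<bar>y - x\<bar> < d \<longrightarrow> (if 0 \<le> y \<and> y < 1 then M else 0) = (if 0 \<le> x \<and> x < 1 then M else 0)"
    proof (intro allI impI)
      fix y assume "\<bar>y - x\<bar> < d"
      then have "\<bar>y - x\<bar> < \<bar>x\<bar>" "\<bar>y - x\<bar> < \<bar>x - 1\<bar>" unfolding d_def by auto
      then have "(0 \<le> y \<and> y < 1) = (0 \<le> x \<and> x < 1)" by (auto simp: abs_if split: if_splits)
      then show "(if 0 \<le> y \<and> y < 1 then M else 0) = (if 0 \<le> x \<and> x < 1 then M else 0)" by simp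
    qed
    then show False using x d unfolding changes_def by blast
  qed
next
  fix x :: real assume "x \<in> {0, 1}"
  then consider "x = 0" | "x = 1" by auto
  then show "x \<in> changes (\<lambda>\<theta>::real. if 0 \<le> \<theta> \<and> \<theta> < 1 then M else 0)"
  proof cases
    case 1
    show ?thesis unfolding changes_def
    proof (clarify)
      fix \<delta> :: real assume "0 < \<delta>" and h: "\<forall>y. \<bar>y - x\<bar> < \<delta> \<longrightarrow> (if 0 \<le> y \<and> y < 1 then M else 0) = (if 0 \<le> x \<and> x < 1 then M else 0)"
      then have "(if 0 \<le> - \<delta> / 2 \<and> - \<delta> / 2 < (1::real) then M else 0) = (if 0 \<le> x \<and> x < 1 then M else 0)"
        using 1 by (intro h[rule_format]) simp
      then show False using 1 M \<open>0 < \<delta>\<close> by simp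
    qed
  next
    case 2
    show ?thesis unfolding changes_def
    proof (clarify)
      fix \<delta> :: real assume dpos: "0 < \<delta>" and h: "\<forall>y. \<bar>y - x\<bar> < \<delta> \<longrightarrow> (if 0 \<le> y \<and> y < 1 then M else 0) = (if 0 \<le> x \<and> x < 1 then M else 0)"
      define y where "y = 1 - min \<delta> 1 / 2"
      have y: "0 \<le> y" "y < 1" "\<bar>y - x\<bar> < \<delta>" using dpos 2 unfolding y_def by (auto simp: abs_if)
      then have "(if 0 \<le> y \<and> y < 1 then M else 0) = (if 0 \<le> x \<and> x < 1 then M else 0)" using h by blast
      then show False using y 2 M by simp
    qed
  qed
qed

lemma changes_ucap: "changes (ucap l e :: real \<Rightarrow> real) = (if e = (0, xv 0) then {0, 1} else {})"
proof (cases "e = (0, xv 0)")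
  case True
  have M: "(2::real)^Suc l \<noteq> 0" by simp
  have "ucap l e = (\<lambda>\<theta>::real. if 0 \<le> \<theta> \<and> \<theta> < 1 then 2^Suc l else 0)" using True by (auto simp: ucap_def)
  then show ?thesis using changes_pulse[OF M] True by simp
next
  case False
  then have "\<exists>c. ucap l e = (\<lambda>\<theta>::real. c)" unfolding ucap_def by auto
  then obtain c where c: "ucap l e = (\<lambda>\<theta>::real. c)" by blast
  show ?thesis unfolding c using False by (simp add: changes_const)
qed

lemma nchanges_ucap: "nchanges (ucap l e :: real \<Rightarrow> real) = (if e = (0, xv 0) then 2 else 0)"
  unfolding nchanges_def changes_ucap by (simp add: zero_enat_def numeral_eq_enat)

lemma num_cap_c: "num_cap_changes (En l) (ucap l) = 2"
  unfolding num_cap_changes_def sum_En nchanges_ucap by simp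

lemma tau_Ints: "tau l e \<in> (\<int>::real set)" unfolding tau_def by auto

lemma size_c:
  assumes "l \<ge> 1"
  shows "dyn_size_le (Vn l) (En l) (tau l) (ucap l) (5 * l ^ 1)"
proof -
  have c1: "card (Vn l) \<le> 5 * l^1" using assms card_Vn[of l] by simp
  have c2: "card (En l) \<le> 5 * l^1" using assms card_En[of l] by simp
  have p: "(2::real)^l \<le> 2^(5*l^1)" by (rule power_increasing) auto
  have c3: "\<forall>e\<in>En l. (tau l e :: real) \<in> \<int> \<and> \<bar>tau l e\<bar> \<le> (2::real)^(5*l^1)"
  proof
    fix e assume e: "e \<in> En l"
    have t1: "tau l e \<le> (2::real)^l" by (rule tau_le[OF e])
    have t2: "(0::real) \<le> tau l e" by (rule tau_nonneg)
    have "tau l e \<le> (2::real)^(5*l^1)" using t1 p by (rule order_trans)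
    then have "\<bar>tau l e\<bar> \<le> (2::real)^(5*l^1)" using t2 by simp
    moreover have "tau l e \<in> (\<int>::real set)" by (rule tau_Ints)
    ultimately show "(tau l e :: real) \<in> \<int> \<and> \<bar>tau l e\<bar> \<le> (2::real)^(5*l^1)" by blast
  qed
  have pr: "(2::real)^Suc l \<le> 2^(5*l^1)" by (rule power_increasing) (use assms in auto)
  have one: "(1::real) \<le> 2^(5*l^1)" by simp
  have c4: "\<forall>e\<in>En l. \<forall>\<theta>::real. ucap l e \<theta> \<in> \<int> \<and> \<bar>ucap l e \<theta>\<bar> \<le> 2^(5*l^1)"
    using pr one unfolding ucap_def by auto
  have c5: "\<forall>e\<in>En l. \<forall>\<theta>\<in>changes (ucap l e :: real \<Rightarrow> real). \<theta> \<in> \<int> \<and> \<bar>\<theta>\<bar> \<le> 2^(5*l^1)"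
    using one by (auto simp: changes_ucap)
  show ?thesis unfolding dyn_size_le_def using c1 c2 c3 c4 c5 by blast
qed

lemma net_c: "dyn_network (Vn l) (En l) 0 (yv l) (tau l) (ucap l)"
  unfolding dyn_network_def
  using finite_Vn En_sub Vn_mem tau_nonneg
  by (auto simp: changes_ucap ucap_def)

lemma cont_part:
  "\<exists>c k :: nat. \<forall>l::nat. l \<ge> 1 \<longrightarrow>
     (\<exists>V E s t \<tau> u.
        dyn_network V E s t \<tau> u \<and> acyclic_graph E \<and>
        dyn_size_le V E \<tau> u (c * l ^ k) \<and>
        num_cap_changes E u = 2 \<and>
        (\<forall>S. is_min_cut_inf V E s t \<tau> u S \<longrightarrow> cut_complexity V S \<ge> 2 ^ l) \<and>
        (\<forall>f. is_max_flow_inf V E s t \<tau> u f \<longrightarrow> flow_complexity E f \<ge> 2 ^ l))"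
proof -
  have "\<forall>l::nat. l \<ge> 1 \<longrightarrow> (\<exists>V E s t \<tau> u.
        dyn_network V E s t \<tau> u \<and> acyclic_graph E \<and>
        dyn_size_le V E \<tau> u (5 * l ^ 1) \<and>
        num_cap_changes E u = 2 \<and>
        (\<forall>S. is_min_cut_inf V E s t \<tau> u S \<longrightarrow> cut_complexity V S \<ge> 2 ^ l) \<and>
        (\<forall>f. is_max_flow_inf V E s t \<tau> u f \<longrightarrow> flow_complexity E f \<ge> 2 ^ l))"
  proof (intro allI impI)
    fix l :: nat assume l: "1 \<le> l"
    show "\<exists>V E s t \<tau> u.
        dyn_network V E s t \<tau> u \<and> acyclic_graph E \<and>
        dyn_size_le V E \<tau> u (5 * l ^ 1) \<and>
        num_cap_changes E u = 2 \<and>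
        (\<forall>S. is_min_cut_inf V E s t \<tau> u S \<longrightarrow> cut_complexity V S \<ge> 2 ^ l) \<and>
        (\<forall>f. is_max_flow_inf V E s t \<tau> u f \<longrightarrow> flow_complexity E f \<ge> 2 ^ l)"
      using net_c acyclic_En size_c[OF l] num_cap_c mincut_c maxflow_c by blast
  qed
  then show ?thesis by blast
qed

theorem corollary3:
  shows
  "(\<exists>c k :: nat. \<forall>l::nat. l \<ge> 1 \<longrightarrow>
     (\<exists>V E s t \<tau> u.
        dyn_network V E s t \<tau> u \<and> acyclic_graph E \<and>
        dyn_size_le V E \<tau> u (c * l ^ k) \<and>
        num_cap_changes E u = 2 \<and>
        (\<forall>S. is_min_cut_inf V E s t \<tau> u S \<longrightarrow> cut_complexity V S \<ge> 2 ^ l) \<and>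
        (\<forall>f. is_max_flow_inf V E s t \<tau> u f \<longrightarrow> flow_complexity E f \<ge> 2 ^ l))) \<and>
   (\<exists>c k :: nat. \<forall>l::nat. l \<ge> 1 \<longrightarrow>
     (\<exists>V E s t \<tau> u.
        dyn_network_d V E s t \<tau> u \<and> acyclic_graph E \<and>
        dyn_size_le_d V E \<tau> u (c * l ^ k) \<and>
        num_cap_changes_d E u = 2 \<and>
        (\<forall>S. is_min_cut_inf_d V E s t \<tau> u S \<longrightarrow> cut_complexity_d V S \<ge> 2 ^ l) \<and>
        (\<forall>f. is_max_flow_inf_d V E s t \<tau> u f \<longrightarrow> flow_complexity_d E f \<ge> 2 ^ l)))"
  using cont_part disc_part by blast


end
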